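(* Assume (A1) and (A2) and let $\ell_n=n^s$ with $s\in(0,1)$. Then (with no null hypothesis assumed) $$\Big|\hat\sigma_H^2-\int_0^1\sigma^2(z)\,dz\Big|\xrightarrow{P}0\qquad(n\to\infty).$$
   Context: Let $(Y_i)_{i\in\mathbb N}$ be a strictly stationary real-valued process with $E[Y_1]=0$, $\mathrm{Var}(Y_1)=1$, which is absolutely regular, i.e. $\beta_Y(k):=\sup_{m\in\mathbb N}\beta\big(\sigma(Y_i,1\le i\le m),\sigma(Y_i,i\ge k+m)\big)\to0$ as $k\to\infty$, where $\beta(\mathcal A,\mathcal B)=E\big[\operatorname{ess\,sup}_{A\in\mathcal A}|P(A\mid\mathcal B)-P(A)|\big]$. Let $\mu:[0,1]\to\mathbb R$ be Lipschitz-continuous and $\sigma:[0,1]\to[\sigma_0,\infty)$ be càdlàg for some constant $\sigma_0>0$. The observations are $X_i=\sigma(i/n)Y_i+\mu(i/n)$, $1\le i\le n$. The block length is $\ell_n=n^s$ and $b_n=n/\ell_n$ (integers). Define $\tilde X_i=X_i-\frac1{\ell_n}\sum_{r=(j-1)\ell_n+1}^{j\ell_n}X_r$ for $i\in\{(j-1)\ell_n+1,\dots,j\ell_n\}$ and $\hat\sigma_H^2=\frac1n\sum_{i=1}^n\tilde X_i^2$. Assumptions: (A1) there is $\vartheta>0$ with $E|Y_1|^{4+2\vartheta}<\infty$; (A2) for the same $\vartheta$, $\sum_{k=1}^\infty\beta_Y(k)^{\vartheta/(2+\vartheta)}<\infty$. *)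

theory Defs
  imports "HOL-Probability.Probability"
begin

definition ess_sup_family :: "'a measure \<Rightarrow> ('a \<Rightarrow> real) set \<Rightarrow> ('a \<Rightarrow> real)" where
  "ess_sup_family M F = (SOME g. g \<in> borel_measurable M
      \<and> (\<forall>f\<in>F. AE x in M. f x \<le> g x)
      \<and> (\<forall>h\<in>borel_measurable M. (\<forall>f\<in>F. AE x in M. f x \<le> h x) \<longrightarrow> (AE x in M. g x \<le> h x)))"

definition gen_sigma :: "'a measure \<Rightarrow> (nat \<Rightarrow> 'a \<Rightarrow> real) \<Rightarrow> nat set \<Rightarrow> 'a measure" where
  "gen_sigma M Y I = sigma (space M) {Y i -` B \<inter> space M | i B. i \<in> I \<and> B \<in> sets borel}"

definition beta_coef :: "'a measure \<Rightarrow> 'a measure \<Rightarrow> 'a measure \<Rightarrow> real" where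
  "beta_coef M MA MB = integral\<^sup>L M (ess_sup_family M
      {(\<lambda>x. \<bar>real_cond_exp M MB (indicator A) x - measure M A\<bar>) | A. A \<in> sets MA})"

definition beta_Y :: "'a measure \<Rightarrow> (nat \<Rightarrow> 'a \<Rightarrow> real) \<Rightarrow> nat \<Rightarrow> real" where
  "beta_Y M Y k = (SUP m\<in>{1::nat..}. beta_coef M (gen_sigma M Y {1..m}) (gen_sigma M Y {k+m..}))"

definition strictly_stationary :: "'a measure \<Rightarrow> (nat \<Rightarrow> 'a \<Rightarrow> real) \<Rightarrow> bool" where
  "strictly_stationary M Y = (\<forall>m k.
      distr M (PiM {1..m} (\<lambda>_. borel)) (\<lambda>\<omega>. \<lambda>i\<in>{1..m}. Y (i + k) \<omega>)
    = distr M (PiM {1..m} (\<lambda>_. borel)) (\<lambda>\<omega>. \<lambda>i\<in>{1..m}. Y i \<omega>))"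

definition cadlag01 :: "(real \<Rightarrow> real) \<Rightarrow> bool" where
  "cadlag01 f = ((\<forall>x\<in>{0..<1}. continuous (at_right x) f)
               \<and> (\<forall>x\<in>{0<..1}. \<exists>L. (f \<longlongrightarrow> L) (at_left x)))"

text \<open>Block length l_n = n^s (used only for n where n^s is an integer dividing n).\<close>
definition blk :: "real \<Rightarrow> nat \<Rightarrow> nat" where
  "blk s n = nat \<lfloor>real n powr s\<rfloor>"

definition obs :: "(real \<Rightarrow> real) \<Rightarrow> (real \<Rightarrow> real) \<Rightarrow> (nat \<Rightarrow> 'a \<Rightarrow> real) \<Rightarrow> nat \<Rightarrow> nat \<Rightarrow> 'a \<Rightarrow> real" where
  "obs sig mu Y n i \<omega> = sig (real i / real n) * Y i \<omega> + mu (real i / real n)"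

definition demeaned :: "(real \<Rightarrow> real) \<Rightarrow> (real \<Rightarrow> real) \<Rightarrow> (nat \<Rightarrow> 'a \<Rightarrow> real) \<Rightarrow> real \<Rightarrow> nat \<Rightarrow> nat \<Rightarrow> 'a \<Rightarrow> real" where
  "demeaned sig mu Y s n i \<omega> = (let l = blk s n; j = (i - 1) div l + 1 in
      obs sig mu Y n i \<omega> - (1 / real l) * (\<Sum>r = (j - 1) * l + 1 .. j * l. obs sig mu Y n r \<omega>))"

definition sigmaH2 :: "(real \<Rightarrow> real) \<Rightarrow> (real \<Rightarrow> real) \<Rightarrow> (nat \<Rightarrow> 'a \<Rightarrow> real) \<Rightarrow> real \<Rightarrow> nat \<Rightarrow> 'a \<Rightarrow> real" where
  "sigmaH2 sig mu Y s n \<omega> = (1 / real n) * (\<Sum>i = 1..n. (demeaned sig mu Y s n i \<omega>)^2)"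

end

theory Submission
  imports Defs
begin


lemma step_integral:
  fixes f :: "real \<Rightarrow> real" and n :: nat
  assumes n: "n \<ge> 1"
  shows "k \<le> n \<Longrightarrow> ((\<lambda>z. f (real_of_int \<lceil>real n * z\<rceil> / real n)) has_integral
          (1 / real n) * (\<Sum>i=1..k. f (real i / real n))) {0..real k / real n}"
proof (induction k)
  case 0
  then show ?case using has_integral_refl(2)[of _ "0::real"] by simp
next
  case (Suc k)
  let ?g = "\<lambda>z. f (real_of_int \<lceil>real n * z\<rceil> / real n)"
  have npos: "real n > 0" using n by simp
  have IH: "(?g has_integral (1 / real n) * (\<Sum>i=1..k. f (real i / real n))) {0..real k / real n}"
    using Suc by simp
  have c: "((\<lambda>z. f (real (Suc k) / real n)) has_integral (1 / real n) * f (real (Suc k) / real n))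
       {real k / real n..real (Suc k) / real n}"
    using has_integral_const_real[of "f (real (Suc k) / real n)" "real k / real n" "real (Suc k) / real n"]
      npos by (simp add: divide_simps)
  have c2: "(?g has_integral (1 / real n) * f (real (Suc k) / real n))
       {real k / real n..real (Suc k) / real n}"
  proof (rule has_integral_spike_finite[OF _ _ c, of "{real k / real n}"])
    fix z assume z: "z \<in> {real k / real n..real (Suc k) / real n} - {real k / real n}"
    then have "real k < real n * z" "real n * z \<le> real (Suc k)" using npos
      by (auto simp: field_simps)
    then have "\<lceil>real n * z\<rceil> = int (Suc k)"
      by (intro ceiling_unique) auto
    then show "?g z = f (real (Suc k) / real n)" by simp
  qed simp
  have "(?g has_integral ((1 / real n) * (\<Sum>i=1..k. f (real i / real n)) + (1 / real n) * f (real (Suc k) / real n)))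
      {0..real (Suc k) / real n}"
    by (rule has_integral_combine[OF _ _ IH c2]) (use npos in \<open>auto simp: divide_simps\<close>)
  then show ?case by (simp add: algebra_simps)
qed

lemma riemann_right_cont:
  fixes f :: "real \<Rightarrow> real"
  assumes B: "\<And>z. z \<in> {0..1} \<Longrightarrow> \<bar>f z\<bar> \<le> B"
    and rc: "\<And>z. z \<in> {0..<1} \<Longrightarrow> continuous (at_right z) f"
  shows "(\<lambda>n. (1 / real n) * (\<Sum>i=1..n. f (real i / real n))) \<longlonglongrightarrow> integral {0..1} f"
proof -
  define g where "g = (\<lambda>(n::nat) z. f (real_of_int \<lceil>real (Suc n) * z\<rceil> / real (Suc n)))"
  have gi: "(g n has_integral (1 / real (Suc n)) * (\<Sum>i=1..Suc n. f (real i / real (Suc n)))) {0..1}" for n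
    using step_integral[of "Suc n" "Suc n" f] unfolding g_def by simp
  have rng: "real_of_int \<lceil>real (Suc n) * z\<rceil> / real (Suc n) \<in> {0..1}" if "z \<in> {0..1}" for n z
  proof -
    have "real (Suc n) * z \<le> real (Suc n)" "0 \<le> real (Suc n) * z" using that by auto
    then have "\<lceil>real (Suc n) * z\<rceil> \<le> int (Suc n)" "0 \<le> \<lceil>real (Suc n) * z\<rceil>"
      by (simp_all add: ceiling_le_iff)
    then have "real_of_int \<lceil>real (Suc n) * z\<rceil> \<le> real (Suc n)" "0 \<le> real_of_int \<lceil>real (Suc n) * z\<rceil>"
      by linarith+
    then show ?thesis by (simp add: divide_le_eq)
  qed
  have le: "norm (g k x) \<le> B" if "x \<in> {0..1}" for k x
    using B[OF rng[OF that, of k]] unfolding g_def by simp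
  have conv: "(\<lambda>k. g k x) \<longlonglongrightarrow> f x" if x: "x \<in> {0..1}" for x
  proof (cases "x = 1")
    case True
    then show ?thesis unfolding g_def by simp
  next
    case False
    with x have x1: "x \<in> {0..<1}" by auto
    show ?thesis
    proof (rule LIMSEQ_I)
      fix r :: real assume r: "r > 0"
      have "((f \<longlongrightarrow> f x) (at_right x))" using rc[OF x1] by (simp add: continuous_within)
      then have "eventually (\<lambda>y. dist (f y) (f x) < r) (at_right x)"
        using r tendstoD by blast
      then obtain b where b: "b > x" "\<And>y. y > x \<Longrightarrow> y < b \<Longrightarrow> dist (f y) (f x) < r"
        unfolding eventually_at_right_field by blast
      obtain N :: nat where N: "1 / (b - x) < real N" using reals_Archimedean2 by blast
      show "\<exists>no. \<forall>k\<ge>no. norm (g k x - f x) < r"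
      proof (intro exI allI impI)
        fix k assume k: "k \<ge> N"
        define y where "y = real_of_int \<lceil>real (Suc k) * x\<rceil> / real (Suc k)"
        have y1: "y \<ge> x" unfolding y_def by (simp add: field_simps)
        have "real_of_int \<lceil>real (Suc k) * x\<rceil> < real (Suc k) * x + 1" by linarith
        then have "y < (real (Suc k) * x + 1) / real (Suc k)" unfolding y_def
          by (intro divide_strict_right_mono) auto
        then have y2: "y < x + 1 / real (Suc k)" by (simp add: add_divide_distrib)
        have "1 < (b - x) * real N" using N b(1) by (simp add: field_simps)
        also have "\<dots> \<le> (b - x) * real (Suc k)" using k b(1) by (intro mult_left_mono) auto
        finally have "1 / real (Suc k) < b - x" by (simp add: field_simps)
        then have "y < b" using y2 by simp
        then have "dist (f y) (f x) < r" if "y > x" using b(2) that by blast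
        then have "\<bar>f y - f x\<bar> < r" using y1 r by (cases "y = x") (auto simp: dist_real_def)
        then show "norm (g k x - f x) < r" unfolding g_def y_def by simp
      qed
    qed
  qed
  have hint: "(\<lambda>x. B) integrable_on {0..1::real}" by auto
  have "(\<lambda>k. integral {0..1} (g k)) \<longlonglongrightarrow> integral {0..1} f"
    by (rule dominated_convergence(2)[OF _ hint le conv]) (use gi in blast)+
  then have "(\<lambda>k. (1 / real (Suc k)) * (\<Sum>i=1..Suc k. f (real i / real (Suc k)))) \<longlonglongrightarrow> integral {0..1} f"
  proof -
    have "integral {0..1} (g k) = (1 / real (Suc k)) * (\<Sum>i=1..Suc k. f (real i / real (Suc k)))" for k
      using gi[of k] by (rule integral_unique)
    then show ?thesis using \<open>(\<lambda>k. integral {0..1} (g k)) \<longlonglongrightarrow> integral {0..1} f\<close> by simp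
  qed
  then show ?thesis by (rule LIMSEQ_imp_Suc)
qed

lemma cadlag_bounded:
  assumes "cadlag01 f"
  shows "\<exists>B. \<forall>z\<in>{0..1}. \<bar>f z\<bar> \<le> B"
proof -
  have loc: "\<exists>d>0. \<exists>C. \<forall>y\<in>{0..1}. \<bar>y - x\<bar> < d \<longrightarrow> \<bar>f y\<bar> \<le> C" if x: "x \<in> {0..1}" for x
  proof -
    obtain d1 C1 where d1: "d1 > 0" "\<And>y. x < y \<Longrightarrow> y < x + d1 \<Longrightarrow> y \<le> 1 \<Longrightarrow> \<bar>f y\<bar> \<le> C1"
    proof (cases "x < 1")
      case True
      then have "continuous (at_right x) f" using assms x unfolding cadlag01_def by auto
      then have "((f \<longlongrightarrow> f x) (at_right x))" by (simp add: continuous_within)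
      then have "eventually (\<lambda>y. dist (f y) (f x) < 1) (at_right x)"
        using tendstoD by fastforce
      then obtain b where b: "b > x" "\<And>y. y > x \<Longrightarrow> y < b \<Longrightarrow> dist (f y) (f x) < 1"
        unfolding eventually_at_right_field by blast
      show ?thesis
      proof (rule that[of "b - x" "\<bar>f x\<bar> + 1"])
        fix y assume "x < y" "y < x + (b - x)"
        then have "dist (f y) (f x) < 1" using b by auto
        then show "\<bar>f y\<bar> \<le> \<bar>f x\<bar> + 1" by (simp add: dist_real_def)
      qed (use b in auto)
    next
      case False
      then show ?thesis using that[of 1 0] x by auto
    qed
    obtain d2 C2 where d2: "d2 > 0" "\<And>y. x - d2 < y \<Longrightarrow> y < x \<Longrightarrow> 0 \<le> y \<Longrightarrow> \<bar>f y\<bar> \<le> C2"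
    proof (cases "x > 0")
      case True
      have "\<exists>L. (f \<longlongrightarrow> L) (at_left x)" using assms x True unfolding cadlag01_def by auto
      then obtain L where "(f \<longlongrightarrow> L) (at_left x)" by blast
      then have "eventually (\<lambda>y. dist (f y) L < 1) (at_left x)"
        using tendstoD by fastforce
      then obtain b where b: "b < x" "\<And>y. y > b \<Longrightarrow> y < x \<Longrightarrow> dist (f y) L < 1"
        unfolding eventually_at_left_field by blast
      show ?thesis
      proof (rule that[of "x - b" "\<bar>L\<bar> + 1"])
        fix y assume "x - (x - b) < y" "y < x"
        then have "dist (f y) L < 1" using b by auto
        then show "\<bar>f y\<bar> \<le> \<bar>L\<bar> + 1" by (simp add: dist_real_def)
      qed (use b in auto)
    next
      case False
      then show ?thesis using that[of 1 0] x by auto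
    qed
    show ?thesis
      apply (rule exI[of _ "min d1 d2"])
      apply (rule conjI) using d1 d2 apply simp
      apply (rule exI[of _ "max (max C1 C2) \<bar>f x\<bar>"])
    proof (intro ballI impI)
      fix y :: real assume y: "y \<in> {0..1}" "\<bar>y - x\<bar> < min d1 d2"
      consider "y < x" | "y = x" | "y > x" by linarith
      then show "\<bar>f y\<bar> \<le> max (max C1 C2) \<bar>f x\<bar>"
      proof cases
        case 1
        then have "\<bar>f y\<bar> \<le> C2" using d2(2)[of y] y by auto
        then show ?thesis by simp
      next
        case 2 then show ?thesis by simp
      next
        case 3
        then have "\<bar>f y\<bar> \<le> C1" using d1(2)[of y] y by auto
        then show ?thesis by simp
      qed
    qed
  qed
  then obtain d C where dC: "\<And>x. x \<in> {0..1} \<Longrightarrow> d x > 0 \<and> (\<forall>y\<in>{0..1}. \<bar>y - x\<bar> < d x \<longrightarrow> \<bar>f y\<bar> \<le> C x)"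
    by metis
  have "compact {0..1::real}" by simp
  moreover have "\<And>x. x \<in> {0..1} \<Longrightarrow> open (ball x (d x))" by simp
  moreover have "{0..1} \<subseteq> (\<Union>x\<in>{0..1}. ball x (d x))"
  proof
    fix z :: real assume "z \<in> {0..1}"
    then have "z \<in> ball z (d z)" using dC[of z] by simp
    then show "z \<in> (\<Union>x\<in>{0..1}. ball x (d x))" using \<open>z \<in> {0..1}\<close> by blast
  qed
  ultimately obtain T where T: "T \<subseteq> {0..1}" "finite T" "{0..1} \<subseteq> (\<Union>x\<in>T. ball x (d x))"
    by (rule compactE_image)
  show ?thesis
  proof (intro exI ballI)
    fix z :: real assume z: "z \<in> {0..1}"
    then obtain x where x: "x \<in> T" "z \<in> ball x (d x)" using T by auto
    then have "\<bar>f z\<bar> \<le> C x" using dC[of x] T z by (auto simp: dist_real_def abs_minus_commute)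
    also have "\<dots> \<le> Max (C ` T)" using T x by auto
    finally show "\<bar>f z\<bar> \<le> Max (C ` T)" .
  qed
qed


lemma ess_sup_exists:
  fixes M :: "'a measure" and F :: "('a \<Rightarrow> real) set"
  assumes P: "prob_space M" and Fne: "F \<noteq> {}"
    and Fm: "\<And>f. f \<in> F \<Longrightarrow> f \<in> borel_measurable M"
    and Fpos: "\<And>f x. f \<in> F \<Longrightarrow> 0 \<le> f x"
    and F1: "\<And>f. f \<in> F \<Longrightarrow> AE x in M. f x \<le> 1"
  shows "\<exists>g. g \<in> borel_measurable M
      \<and> (\<forall>f\<in>F. AE x in M. f x \<le> g x)
      \<and> (\<forall>h\<in>borel_measurable M. (\<forall>f\<in>F. AE x in M. f x \<le> h x) \<longrightarrow> (AE x in M. g x \<le> h x))"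
proof -
  interpret prob_space M by (rule P)
  define Q where "Q = {u :: nat \<Rightarrow> 'a \<Rightarrow> real. \<forall>i. u i \<in> F}"
  define H where "H u x = (SUP i. min 1 (u i x))" for u :: "nat \<Rightarrow> 'a \<Rightarrow> real" and x
  have bdd: "bdd_above (range (\<lambda>i. min 1 (u i x)))" for u :: "nat \<Rightarrow> 'a \<Rightarrow> real" and x
    by (rule bdd_aboveI[of _ 1]) auto
  have Hge: "min 1 (u i x) \<le> H u x" for u i x
    unfolding H_def by (rule cSUP_upper[OF _ bdd]) simp
  have Hle1: "H u x \<le> 1" for u x
    unfolding H_def by (rule cSUP_least) auto
  have Hpos: "u \<in> Q \<Longrightarrow> 0 \<le> H u x" for u x
    using Hge[of u 0 x] Fpos[of "u 0" x] unfolding Q_def by auto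
  have Hm: "u \<in> Q \<Longrightarrow> H u \<in> borel_measurable M" for u
    unfolding H_def Q_def
    by (rule borel_measurable_cSUP) (use Fm in \<open>auto intro: bdd\<close>)
  have Hint: "u \<in> Q \<Longrightarrow> integrable M (H u)" for u
    by (rule integrable_const_bound[where B=1]) (use Hm Hpos Hle1 in auto)
  define V where "V u = integral\<^sup>L M (H u)" for u
  have V1: "u \<in> Q \<Longrightarrow> V u \<le> 1" for u
  proof -
    assume u: "u \<in> Q"
    have "V u \<le> integral\<^sup>L M (\<lambda>x. 1)" unfolding V_def
      by (rule integral_mono[OF Hint[OF u]]) (use Hle1 in auto)
    then show ?thesis by (simp add: prob_space)
  qed
  obtain f0 where f0: "f0 \<in> F" using Fne by blast
  have Qne: "Q \<noteq> {}" using f0 unfolding Q_def by auto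
  have bddV: "bdd_above (V ` Q)" by (rule bdd_aboveI[of _ 1]) (use V1 in auto)
  define S where "S = (SUP u\<in>Q. V u)"
  have VS: "u \<in> Q \<Longrightarrow> V u \<le> S" for u unfolding S_def by (rule cSUP_upper[OF _ bddV])
  have "\<exists>u\<in>Q. S - 1 / real (Suc m) < V u" for m
  proof -
    have "S - 1 / real (Suc m) < S" by simp
    then show ?thesis unfolding S_def using less_cSUP_iff[OF Qne bddV] by blast
  qed
  then obtain U where U: "\<And>m. U m \<in> Q" "\<And>m. S - 1 / real (Suc m) < V (U m)" by metis
  define w where "w i = U (fst (prod_decode i)) (snd (prod_decode i))" for i
  have wQ: "w \<in> Q" using U(1) unfolding w_def Q_def by auto
  have wU: "H (U m) x \<le> H w x" for m x
  proof -
    have "min 1 (U m i x) \<le> H w x" for i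
      using Hge[of w "prod_encode (m, i)" x] unfolding w_def by simp
    then show ?thesis unfolding H_def by (intro cSUP_least) auto
  qed
  have VwS: "V w = S"
  proof (rule antisym)
    show "V w \<le> S" by (rule VS[OF wQ])
    show "S \<le> V w"
    proof (rule field_le_epsilon)
      fix e :: real assume e: "e > 0"
      obtain m :: nat where m: "1 / e < real m" using reals_Archimedean2 by blast
      have "1 / real (Suc m) < e" using m e by (simp add: field_simps)
      moreover have "V (U m) \<le> V w" unfolding V_def
        by (rule integral_mono[OF Hint[OF U(1)] Hint[OF wQ]]) (use wU in auto)
      ultimately show "S \<le> V w + e" using U(2)[of m] by linarith
    qed
  qed
  define g where "g = H w"
  show ?thesis
  proof (intro exI conjI ballI impI)
    show "g \<in> borel_measurable M" unfolding g_def by (rule Hm[OF wQ])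
  next
    fix f assume f: "f \<in> F"
    define w' where "w' i = (if i = 0 then f else w (i - 1))" for i
    have w'Q: "w' \<in> Q" using f wQ unfolding w'_def Q_def by auto
    have ww': "H w x \<le> H w' x" for x
    proof -
      have "min 1 (w i x) \<le> H w' x" for i
        using Hge[of w' "Suc i" x] unfolding w'_def by simp
      then show ?thesis unfolding H_def by (intro cSUP_least) auto
    qed
    have fw': "min 1 (f x) \<le> H w' x" for x
      using Hge[of w' 0 x] unfolding w'_def by simp
    have "integral\<^sup>L M (\<lambda>x. H w' x - H w x) = V w' - V w"
      unfolding V_def by (rule Bochner_Integration.integral_diff[OF Hint[OF w'Q] Hint[OF wQ]])
    also have "\<dots> \<le> 0" using VS[OF w'Q] VwS by simp
    finally have le0: "integral\<^sup>L M (\<lambda>x. H w' x - H w x) \<le> 0" .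
    have "integral\<^sup>L M (\<lambda>x. H w' x - H w x) = 0 \<longleftrightarrow> (AE x in M. H w' x - H w x = 0)"
      by (rule integral_nonneg_eq_0_iff_AE) (use Hint[OF w'Q] Hint[OF wQ] ww' in auto)
    moreover have "integral\<^sup>L M (\<lambda>x. H w' x - H w x) \<ge> 0"
      by (rule integral_nonneg_AE) (use ww' in auto)
    ultimately have A1: "AE x in M. H w' x - H w x = 0" using le0 by linarith
    have A3: "AE x in M. min 1 (f x) \<le> H w' x" using fw' by simp
    show "AE x in M. f x \<le> g x"
      using A1 F1[OF f] A3 unfolding g_def by eventually_elim linarith
  next
    fix h assume h: "h \<in> borel_measurable M" and dom: "\<forall>f\<in>F. AE x in M. f x \<le> h x"
    have "AE x in M. \<forall>i. w i x \<le> h x"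
      using wQ dom unfolding Q_def by (subst AE_all_countable) auto
    then show "AE x in M. g x \<le> h x"
    proof eventually_elim
      case (elim x)
      then have "min 1 (w i x) \<le> h x" for i by (meson min.coboundedI2)
      then show ?case unfolding g_def H_def by (intro cSUP_least) auto
    qed
  qed
qed


lemma abs_integral_le:
  fixes f g :: "'a \<Rightarrow> real"
  assumes "integrable M f" "integrable M g" "\<And>x. x \<in> space M \<Longrightarrow> \<bar>f x\<bar> \<le> g x"
  shows "\<bar>integral\<^sup>L M f\<bar> \<le> integral\<^sup>L M g"
proof -
  have "\<bar>integral\<^sup>L M f\<bar> \<le> integral\<^sup>L M (\<lambda>x. \<bar>f x\<bar>)"
    using integral_norm_bound[of M f] by simp
  also have "\<dots> \<le> integral\<^sup>L M g"
    by (rule integral_mono) (use assms in auto)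
  finally show ?thesis .
qed

lemma gen_sigma_space_sets:
  assumes Ym: "\<And>i. Y i \<in> borel_measurable M"
  shows "space (gen_sigma M Y I) = space M"
    and "sets (gen_sigma M Y I) = sigma_sets (space M) {Y i -` B \<inter> space M | i B. i \<in> I \<and> B \<in> sets borel}"
    and "sets (gen_sigma M Y I) \<subseteq> sets M"
proof -
  have sub: "{Y i -` B \<inter> space M | i B. i \<in> I \<and> B \<in> sets borel} \<subseteq> Pow (space M)" by auto
  show "space (gen_sigma M Y I) = space M" unfolding gen_sigma_def by (rule space_measure_of[OF sub])
  show S: "sets (gen_sigma M Y I) = sigma_sets (space M) {Y i -` B \<inter> space M | i B. i \<in> I \<and> B \<in> sets borel}"
    unfolding gen_sigma_def by (rule sets_measure_of[OF sub])
  have "{Y i -` B \<inter> space M | i B. i \<in> I \<and> B \<in> sets borel} \<subseteq> sets M"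
    using Ym by (auto simp: measurable_def)
  then show "sets (gen_sigma M Y I) \<subseteq> sets M" unfolding S
    by (rule sets.sigma_sets_subset)
qed

lemma gen_sigma_subalg:
  assumes Ym: "\<And>i. Y i \<in> borel_measurable M"
  shows "subalgebra M (gen_sigma M Y I)"
  using gen_sigma_space_sets[OF Ym] unfolding subalgebra_def by auto

lemma gen_sigma_meas:
  assumes Ym: "\<And>i. Y i \<in> borel_measurable M" and i: "i \<in> I"
  shows "Y i \<in> borel_measurable (gen_sigma M Y I)"
proof (rule measurableI)
  fix A :: "real set" assume "A \<in> sets borel"
  then have "Y i -` A \<inter> space M \<in> {Y i -` B \<inter> space M | i B. i \<in> I \<and> B \<in> sets borel}"
    using i by blast
  then show "Y i -` A \<inter> space (gen_sigma M Y I) \<in> sets (gen_sigma M Y I)"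
    unfolding gen_sigma_space_sets(1,2)[OF Ym] by (rule sigma_sets.Basic)
qed auto

lemma gen_sigma_set:
  assumes Ym: "\<And>i. Y i \<in> borel_measurable M" and i: "i \<in> I" and B: "B \<in> sets borel"
  shows "Y i -` B \<inter> space M \<in> sets (gen_sigma M Y I)"
  unfolding gen_sigma_space_sets(2)[OF Ym] using i B by (intro sigma_sets.Basic) blast

context
  fixes M MA MB :: "'a measure"
  assumes P: "prob_space M" and subA: "subalgebra M MA" and subB: "subalgebra M MB"
begin

interpretation prob_space M by (rule P)

interpretation sfs: sigma_finite_subalgebra M MB
proof -
  have "finite_measure_subalgebra M MB"
    unfolding finite_measure_subalgebra_def finite_measure_subalgebra_axioms_def
    using subB finite_measure_axioms by auto
  then show "sigma_finite_subalgebra M MB" by (rule finite_measure_subalgebra_is_sigma_finite)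
qed

definition "famB = {(\<lambda>x. \<bar>real_cond_exp M MB (indicator A) x - measure M A\<bar>) | A. A \<in> sets MA}"

lemma famB_props:
  assumes "f \<in> famB"
  shows "f \<in> borel_measurable M" "\<And>x. 0 \<le> f x" "AE x in M. f x \<le> 1"
proof -
  obtain A where A: "A \<in> sets MA" "f = (\<lambda>x. \<bar>real_cond_exp M MB (indicator A) x - measure M A\<bar>)"
    using assms unfolding famB_def by blast
  have AM: "A \<in> sets M" using A subA unfolding subalgebra_def by auto
  show "f \<in> borel_measurable M" unfolding A by measurable
  show "\<And>x. 0 \<le> f x" unfolding A by simp
  note p1 = prob_le_1[of A] measure_nonneg[of M A]
  have int: "integrable M (indicator A :: 'a \<Rightarrow> real)" using AM by (simp add: emeasure_eq_measure)
  have "AE x in M. real_cond_exp M MB (indicator A) x \<ge> 0"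
    by (rule sfs.real_cond_exp_ge_c[OF int]) auto
  moreover have "AE x in M. real_cond_exp M MB (indicator A) x \<le> 1"
    by (rule sfs.real_cond_exp_le_c[OF int]) (auto split: split_indicator)
  ultimately show "AE x in M. f x \<le> 1" unfolding A
  proof eventually_elim
    case (elim x)
    then show ?case using p1 unfolding abs_le_iff by linarith
  qed
qed

lemma famB_ne: "famB \<noteq> {}"
  unfolding famB_def using sets.empty_sets[of MA] by blast

lemma ess_spec:
  defines "g \<equiv> ess_sup_family M famB"
  shows "g \<in> borel_measurable M" "\<forall>f\<in>famB. AE x in M. f x \<le> g x"
    "\<forall>h\<in>borel_measurable M. (\<forall>f\<in>famB. AE x in M. f x \<le> h x) \<longrightarrow> (AE x in M. g x \<le> h x)"
proof -
  have ex: "\<exists>g. g \<in> borel_measurable M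
      \<and> (\<forall>f\<in>famB. AE x in M. f x \<le> g x)
      \<and> (\<forall>h\<in>borel_measurable M. (\<forall>f\<in>famB. AE x in M. f x \<le> h x) \<longrightarrow> (AE x in M. g x \<le> h x))"
    by (rule ess_sup_exists[OF P famB_ne]) (use famB_props in auto)
  show "g \<in> borel_measurable M" "\<forall>f\<in>famB. AE x in M. f x \<le> g x"
    "\<forall>h\<in>borel_measurable M. (\<forall>f\<in>famB. AE x in M. f x \<le> h x) \<longrightarrow> (AE x in M. g x \<le> h x)"
    unfolding g_def ess_sup_family_def using someI_ex[OF ex] by blast+
qed

lemma beta_coef_facts:
  shows "beta_coef M MA MB \<le> 1"
    and "\<And>A. A \<in> sets MA \<Longrightarrow> integral\<^sup>L M (\<lambda>x. \<bar>real_cond_exp M MB (indicator A) x - measure M A\<bar>) \<le> beta_coef M MA MB"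
proof -
  define g where "g = ess_sup_family M famB"
  note sp = ess_spec[folded g_def]
  have bc: "beta_coef M MA MB = integral\<^sup>L M g"
    unfolding beta_coef_def g_def famB_def ..
  have g1: "AE x in M. g x \<le> 1"
    using sp(3) famB_props(3) by auto
  obtain f0 where f0: "f0 \<in> famB" using famB_ne by blast
  have "AE x in M. f0 x \<le> g x" using sp(2) f0 by auto
  then have g0: "AE x in M. 0 \<le> g x"
    by eventually_elim (use famB_props(2)[OF f0] in \<open>rule order_trans\<close>)
  have gint: "integrable M g"
    by (rule integrable_const_bound[where B=1]) (use g0 g1 sp(1) in auto)
  have "integral\<^sup>L M g \<le> integral\<^sup>L M (\<lambda>x. 1)"
    by (rule integral_mono_AE) (use gint g1 in auto)
  then show "beta_coef M MA MB \<le> 1" using bc by (simp add: prob_space)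
  fix A assume A: "A \<in> sets MA"
  define f where "f = (\<lambda>x. \<bar>real_cond_exp M MB (indicator A) x - measure M A\<bar>)"
  have fB: "f \<in> famB" unfolding f_def famB_def using A by blast
  have fint: "integrable M f"
    by (rule integrable_const_bound[where B=1]) (use famB_props[OF fB] in auto)
  have "integral\<^sup>L M f \<le> integral\<^sup>L M g"
    by (rule integral_mono_AE[OF fint gint]) (use sp(2) fB in auto)
  then show "integral\<^sup>L M (\<lambda>x. \<bar>real_cond_exp M MB (indicator A) x - measure M A\<bar>) \<le> beta_coef M MA MB"
    using bc unfolding f_def by simp
qed

lemma cov_indicator_bound:
  assumes A: "A \<in> sets MA" and psi: "psi \<in> borel_measurable MB" and C: "\<And>x. \<bar>psi x\<bar> \<le> C"
  shows "\<bar>integral\<^sup>L M (\<lambda>x. psi x * indicator A x) - measure M A * integral\<^sup>L M psi\<bar> \<le> C * beta_coef M MA MB"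
proof -
  have AM: "A \<in> sets M" using A subA unfolding subalgebra_def by auto
  have psiM: "psi \<in> borel_measurable M" by (rule measurable_from_subalg[OF subB psi])
  have C0: "0 \<le> C" using C[of undefined] by linarith
  let ?r = "real_cond_exp M MB (indicator A)"
  have int1: "integrable M (\<lambda>x. psi x * indicator A x)"
    by (rule integrable_const_bound[where B=C]) (use C C0 psiM AM in \<open>auto split: split_indicator\<close>)
  have e1: "integral\<^sup>L M (\<lambda>x. psi x * ?r x) = integral\<^sup>L M (\<lambda>x. psi x * indicator A x)"
    and i1: "integrable M (\<lambda>x. psi x * ?r x)"
    using sfs.real_cond_exp_intg[OF int1 psi] AM by auto
  have ipsi: "integrable M psi"
    by (rule integrable_const_bound[where B=C]) (use C psiM in auto)
  have f: "integrable M (\<lambda>x. \<bar>?r x - measure M A\<bar>)"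
    by (rule integrable_const_bound[where B=1]) (use famB_props[of "(\<lambda>x. \<bar>?r x - measure M A\<bar>)"] A in \<open>auto simp: famB_def\<close>)
  have "integral\<^sup>L M (\<lambda>x. psi x * indicator A x) - measure M A * integral\<^sup>L M psi
      = integral\<^sup>L M (\<lambda>x. psi x * (?r x - measure M A))"
    using e1 i1 ipsi by (simp add: right_diff_distrib)
  also have "\<bar>\<dots>\<bar> \<le> integral\<^sup>L M (\<lambda>x. C * \<bar>?r x - measure M A\<bar>)"
  proof (rule abs_integral_le)
    show "integrable M (\<lambda>x. psi x * (?r x - measure M A))"
      using i1 ipsi by (simp add: right_diff_distrib)
    show "integrable M (\<lambda>x. C * \<bar>?r x - measure M A\<bar>)" using f by simp
    show "\<And>x. x \<in> space M \<Longrightarrow> \<bar>psi x * (?r x - measure M A)\<bar> \<le> C * \<bar>?r x - measure M A\<bar>"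
      using C by (simp add: abs_mult mult_right_mono)
  qed
  also have "\<dots> = C * integral\<^sup>L M (\<lambda>x. \<bar>?r x - measure M A\<bar>)" by simp
  also have "\<dots> \<le> C * beta_coef M MA MB"
    using beta_coef_facts(2)[OF A] C0 by (intro mult_left_mono) auto
  finally show ?thesis .
qed

end


lemma floor_sum_ind:
  fixes q K :: int
  assumes "-K \<le> q" "q \<le> K"
  shows "(\<Sum>j\<in>{-K+1..K}. (if j \<le> q then 1 else 0 :: real)) = real_of_int q + real_of_int K"
proof -
  have "(\<Sum>j\<in>{-K+1..K}. (if j \<le> q then 1 else 0 :: real)) = real (card ({-K+1..K} \<inter> {j. j \<le> q}))"
    by (simp add: sum.If_cases)
  also have "{-K+1..K} \<inter> {j. j \<le> q} = {-K+1..q}" using assms by auto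
  also have "real (card {-K+1..q}) = real_of_int q + real_of_int K" using assms by simp
  finally show ?thesis .
qed

context
  fixes M MA MB :: "'a measure"
  assumes P: "prob_space M" and subA: "subalgebra M MA" and subB: "subalgebra M MB"
begin

interpretation prob_space M by (rule P)

lemma cov_bounded:
  assumes h: "h \<in> borel_measurable MA" and hF: "\<And>x. \<bar>h x\<bar> \<le> F"
    and psi: "psi \<in> borel_measurable MB" and C: "\<And>x. \<bar>psi x\<bar> \<le> C"
  shows "\<bar>integral\<^sup>L M (\<lambda>x. h x * psi x) - integral\<^sup>L M h * integral\<^sup>L M psi\<bar> \<le> 2 * F * C * beta_coef M MA MB"
proof -
  define \<beta> where "\<beta> = beta_coef M MA MB"
  have hM: "h \<in> borel_measurable M" by (rule measurable_from_subalg[OF subA h])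
  have psiM: "psi \<in> borel_measurable M" by (rule measurable_from_subalg[OF subB psi])
  have C0: "0 \<le> C" using C[of undefined] by linarith
  have F0: "0 \<le> F" using hF[of undefined] by linarith
  have spA: "space MA = space M" using subA unfolding subalgebra_def by auto
  have setsA: "sets MA \<subseteq> sets M" using subA unfolding subalgebra_def by auto
  define cv where "cv g = integral\<^sup>L M (\<lambda>x. g x * psi x) - integral\<^sup>L M g * integral\<^sup>L M psi" for g :: "'a \<Rightarrow> real"
  have ipsi: "integrable M psi" by (rule integrable_const_bound[where B=C]) (use C psiM in auto)
  have bint: "integrable M g" if "g \<in> borel_measurable M" "\<And>x. \<bar>g x\<bar> \<le> D" for g and D :: real
    by (rule integrable_const_bound[where B=D]) (use that in auto)
  have bint2: "integrable M (\<lambda>x. g x * psi x)" if "g \<in> borel_measurable M" "\<And>x. \<bar>g x\<bar> \<le> D" for g and D :: real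
  proof (rule integrable_const_bound[where B="D * C"])
    have D0: "0 \<le> D" using that(2)[of undefined] by linarith
    show "AE x in M. norm (g x * psi x) \<le> D * C"
      using that(2) C D0 C0 by (auto simp: abs_mult intro!: mult_mono)
  qed (use that psiM in auto)
  have key: "\<bar>cv h\<bar> \<le> 2 * F * C * \<beta> + (2 * C * \<beta> + 2 * C) / real N" if N: "N \<ge> 1" for N :: nat
  proof -
    define K where "K = \<lceil>real N * F\<rceil>"
    define q where "q x = \<lfloor>real N * h x\<rfloor>" for x
    define A where "A j = {x \<in> space M. real_of_int j / real N \<le> h x}" for j :: int
    have Npos: "real N > 0" using N by simp
    have qK: "-K \<le> q x \<and> q x \<le> K" for x
    proof -
      have "- F \<le> h x" "h x \<le> F" using hF[of x] by (auto simp: abs_le_iff)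
      then have "real N * (- F) \<le> real N * h x" "real N * h x \<le> real N * F"
        using Npos mult_left_mono[of "-F" "h x" "real N"] mult_left_mono[of "h x" F "real N"] by auto
      then have "- (real N * F) \<le> real N * h x" "real N * h x \<le> real N * F" by auto
      then show ?thesis unfolding q_def K_def by (auto intro!: floor_mono le_floor_iff[THEN iffD2]; linarith)
    qed
    have Aset: "A j \<in> sets MA" for j
    proof -
      have "A j = {x \<in> space MA. real_of_int j / real N \<le> h x}" unfolding A_def spA ..
      also have "\<dots> \<in> sets MA" using h by measurable
      finally show ?thesis .
    qed
    have AM: "A j \<in> sets M" for j using Aset setsA by auto
    have qA: "(j \<le> q x) \<longleftrightarrow> real_of_int j / real N \<le> h x" for j x
      unfolding q_def using Npos by (simp add: le_floor_iff field_simps)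
    define hN where "hN x = real_of_int (q x) / real N" for x
    have hN_eq: "hN x = (- real_of_int K + (\<Sum>j\<in>{-K+1..K}. indicator (A j) x)) / real N" if x: "x \<in> space M" for x
    proof -
      have "(\<Sum>j\<in>{-K+1..K}. indicator (A j) x :: real) = (\<Sum>j\<in>{-K+1..K}. (if j \<le> q x then 1 else 0))"
        by (rule sum.cong) (use x qA in \<open>auto simp: A_def\<close>)
      also have "\<dots> = real_of_int (q x) + real_of_int K" using qK[of x] by (intro floor_sum_ind) auto
      finally show ?thesis unfolding hN_def by simp
    qed
    have ind_int: "integrable M (indicator (A j) :: 'a \<Rightarrow> real)" for j
      using AM[of j] by (simp add: emeasure_eq_measure)
    have ind_int2: "integrable M (\<lambda>x. indicator (A j) x * psi x)" for j
    proof (rule bint2)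
      show "indicator (A j) \<in> borel_measurable M" using AM by simp
      show "\<bar>indicator (A j) x\<bar> \<le> (1::real)" for x by (simp split: split_indicator)
    qed
    have cv_ind: "\<bar>cv (indicator (A j))\<bar> \<le> C * \<beta>" for j
    proof -
      have "\<bar>integral\<^sup>L M (\<lambda>x. psi x * indicator (A j) x) - measure M (A j) * integral\<^sup>L M psi\<bar> \<le> C * \<beta>"
        unfolding \<beta>_def by (rule cov_indicator_bound[OF P subA subB Aset psi C])
      moreover have "integral\<^sup>L M (indicator (A j) :: 'a \<Rightarrow> real) = measure M (A j)"
        using AM[of j] by simp
      ultimately show ?thesis unfolding cv_def by (simp add: mult.commute)
    qed
    have cv_hN: "cv hN = (\<Sum>j\<in>{-K+1..K}. cv (indicator (A j))) / real N"
    proof -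
      have e1: "integral\<^sup>L M hN = (- real_of_int K + (\<Sum>j\<in>{-K+1..K}. integral\<^sup>L M (indicator (A j)))) / real N"
      proof -
        have "integral\<^sup>L M hN = integral\<^sup>L M (\<lambda>x. (- real_of_int K + (\<Sum>j\<in>{-K+1..K}. indicator (A j) x)) / real N)"
          by (rule Bochner_Integration.integral_cong) (use hN_eq in auto)
        also have "\<dots> = integral\<^sup>L M (\<lambda>x. - real_of_int K + (\<Sum>j\<in>{-K+1..K}. indicator (A j) x)) / real N"
          by (rule integral_divide_zero)
        also have "integral\<^sup>L M (\<lambda>x. - real_of_int K + (\<Sum>j\<in>{-K+1..K}. indicator (A j) x))
            = integral\<^sup>L M (\<lambda>x. - real_of_int K) + integral\<^sup>L M (\<lambda>x. \<Sum>j\<in>{-K+1..K}. indicator (A j) x :: real)"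
          by (rule Bochner_Integration.integral_add) (use ind_int in auto)
        also have "integral\<^sup>L M (\<lambda>x. \<Sum>j\<in>{-K+1..K}. indicator (A j) x :: real) = (\<Sum>j\<in>{-K+1..K}. integral\<^sup>L M (indicator (A j)))"
          by (subst Bochner_Integration.integral_sum) (use ind_int in auto)
        also have "integral\<^sup>L M (\<lambda>x. - real_of_int K) = - real_of_int K" by (simp add: prob_space)
        finally show ?thesis .
      qed
      have e2: "integral\<^sup>L M (\<lambda>x. hN x * psi x) = (- real_of_int K * integral\<^sup>L M psi + (\<Sum>j\<in>{-K+1..K}. integral\<^sup>L M (\<lambda>x. indicator (A j) x * psi x))) / real N"
      proof -
        have "integral\<^sup>L M (\<lambda>x. hN x * psi x) = integral\<^sup>L M (\<lambda>x. (- real_of_int K * psi x + (\<Sum>j\<in>{-K+1..K}. indicator (A j) x * psi x)) / real N)"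
        proof (rule Bochner_Integration.integral_cong)
          fix x assume x: "x \<in> space M"
          show "hN x * psi x = (- real_of_int K * psi x + (\<Sum>j\<in>{-K+1..K}. indicator (A j) x * psi x)) / real N"
            by (simp only: hN_eq[OF x] times_divide_eq_left distrib_right sum_distrib_right)
        qed simp
        also have "\<dots> = integral\<^sup>L M (\<lambda>x. - real_of_int K * psi x + (\<Sum>j\<in>{-K+1..K}. indicator (A j) x * psi x)) / real N"
          by (rule integral_divide_zero)
        also have "integral\<^sup>L M (\<lambda>x. - real_of_int K * psi x + (\<Sum>j\<in>{-K+1..K}. indicator (A j) x * psi x))
            = integral\<^sup>L M (\<lambda>x. - real_of_int K * psi x) + integral\<^sup>L M (\<lambda>x. \<Sum>j\<in>{-K+1..K}. indicator (A j) x * psi x)"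
        proof -
          have isum: "integrable M (\<lambda>x. \<Sum>j\<in>{-K+1..K}. indicator (A j) x * psi x)"
            by (rule Bochner_Integration.integrable_sum) (rule ind_int2)
          show ?thesis by (rule Bochner_Integration.integral_add[OF _ isum]) (use ipsi in simp)
        qed
        also have "integral\<^sup>L M (\<lambda>x. \<Sum>j\<in>{-K+1..K}. indicator (A j) x * psi x) = (\<Sum>j\<in>{-K+1..K}. integral\<^sup>L M (\<lambda>x. indicator (A j) x * psi x))"
          by (subst Bochner_Integration.integral_sum) (use ind_int2 in auto)
        also have "integral\<^sup>L M (\<lambda>x. - real_of_int K * psi x) = - real_of_int K * integral\<^sup>L M psi" by simp
        finally show ?thesis .
      qed
      show ?thesis unfolding cv_def e1 e2
        by (simp add: field_simps sum_subtractf sum_distrib_left sum_distrib_right)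
          (simp add: add_divide_distrib[symmetric])
    qed
    have "\<bar>cv hN\<bar> \<le> (\<Sum>j\<in>{-K+1..K}. \<bar>cv (indicator (A j))\<bar>) / real N"
      unfolding cv_hN using Npos by (simp add: divide_right_mono sum_abs)
    also have "\<dots> \<le> (\<Sum>j\<in>{-K+1..K}. C * \<beta>) / real N"
      using Npos by (intro divide_right_mono sum_mono cv_ind) auto
    also have "\<dots> = real (nat (2 * K)) * C * \<beta> / real N" by simp
    also have "\<dots> \<le> (2 * real N * F + 2) * C * \<beta> / real N"
    proof -
      have "real_of_int K \<le> real N * F + 1" unfolding K_def by linarith
      moreover have "0 \<le> K"
      proof -
        have "0 \<le> real N * F" using F0 Npos by simp
        then show ?thesis unfolding K_def by linarith
      qed
      ultimately have "real (nat (2 * K)) \<le> 2 * real N * F + 2" by simp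
      moreover have "0 \<le> \<beta>"
      proof -
        have "0 \<le> integral\<^sup>L M (\<lambda>x. \<bar>real_cond_exp M MB (indicator {}) x - measure M {}\<bar>)"
          by (rule Bochner_Integration.integral_nonneg) auto
        also have "\<dots> \<le> \<beta>" unfolding \<beta>_def by (rule beta_coef_facts(2)[OF P subA subB]) simp
        finally show ?thesis .
      qed
      ultimately show ?thesis using C0 Npos
        by (intro divide_right_mono mult_right_mono) auto
    qed
    also have "\<dots> = 2 * F * C * \<beta> + 2 * C * \<beta> / real N" using Npos by (simp add: field_simps)
    finally have b1: "\<bar>cv hN\<bar> \<le> 2 * F * C * \<beta> + 2 * C * \<beta> / real N" .
    have hNm: "hN \<in> borel_measurable M" unfolding hN_def q_def using hM by measurable
    have hNb: "\<bar>hN x\<bar> \<le> F + 1" for x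
    proof -
      have "\<bar>real_of_int (q x)\<bar> \<le> real_of_int K" using qK[of x] by auto
      also have "\<dots> \<le> real N * F + 1" unfolding K_def by linarith
      also have "\<dots> \<le> real N * (F + 1)" using N by (simp add: algebra_simps)
      finally show ?thesis unfolding hN_def using Npos by (simp add: abs_div divide_le_eq mult.commute)
    qed
    have dif: "\<bar>h x - hN x\<bar> \<le> 1 / real N" for x
    proof -
      have "real_of_int (q x) \<le> real N * h x" "real N * h x < real_of_int (q x) + 1" unfolding q_def by linarith+
      then have "0 \<le> real N * h x - real_of_int (q x)" "real N * h x - real_of_int (q x) \<le> 1" by linarith+
      moreover have "h x - hN x = (real N * h x - real_of_int (q x)) / real N"
        unfolding hN_def using Npos by (simp add: field_simps)
      ultimately show ?thesis using Npos by (simp add: divide_right_mono)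
    qed
    have "cv h - cv hN = integral\<^sup>L M (\<lambda>x. (h x - hN x) * psi x) - integral\<^sup>L M (\<lambda>x. h x - hN x) * integral\<^sup>L M psi"
      unfolding cv_def
      using bint[OF hM hF] bint[OF hNm hNb] bint2[OF hM hF] bint2[OF hNm hNb]
      by (simp add: left_diff_distrib)
    also have "\<bar>\<dots>\<bar> \<le> 2 * C / real N"
    proof -
      have dm: "(\<lambda>x. h x - hN x) \<in> borel_measurable M" using hM hNm by measurable
      have i1: "\<bar>integral\<^sup>L M (\<lambda>x. (h x - hN x) * psi x)\<bar> \<le> integral\<^sup>L M (\<lambda>x. C / real N)"
        by (rule abs_integral_le) (use bint2[OF dm dif] dif C C0 Npos in \<open>auto simp: abs_mult intro: mult_mono[of _ "1 / real N" _ C, simplified]\<close>)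
      have i2: "\<bar>integral\<^sup>L M (\<lambda>x. h x - hN x)\<bar> \<le> integral\<^sup>L M (\<lambda>x. 1 / real N)"
        by (rule abs_integral_le) (use bint[OF dm dif] dif in auto)
      have i3: "\<bar>integral\<^sup>L M psi\<bar> \<le> integral\<^sup>L M (\<lambda>x. C)"
        by (rule abs_integral_le) (use ipsi C in auto)
      have "\<bar>integral\<^sup>L M (\<lambda>x. h x - hN x) * integral\<^sup>L M psi\<bar> \<le> (1 / real N) * C"
        unfolding abs_mult using i2 i3 by (intro mult_mono) (auto simp: prob_space)
      then show ?thesis using i1 by (simp add: prob_space)
    qed
    finally have "\<bar>cv h - cv hN\<bar> \<le> 2 * C / real N" .
    then show ?thesis using b1 by (simp add: add_divide_distrib)
  qed
  have b0: "0 \<le> 2 * C * \<beta> + 2 * C"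
  proof -
    have "0 \<le> integral\<^sup>L M (\<lambda>x. \<bar>real_cond_exp M MB (indicator {}) x - measure M {}\<bar>)"
      by (rule Bochner_Integration.integral_nonneg) auto
    also have "\<dots> \<le> \<beta>" unfolding \<beta>_def by (rule beta_coef_facts(2)[OF P subA subB]) simp
    finally show ?thesis using C0 by simp
  qed
  have "\<bar>cv h\<bar> \<le> 2 * F * C * \<beta>"
  proof (rule field_le_epsilon)
    fix e :: real assume e: "0 < e"
    obtain N0 :: nat where N0: "(2 * C * \<beta> + 2 * C) / e < real N0" using reals_Archimedean2 by blast
    define N where "N = Suc N0"
    have N: "(2 * C * \<beta> + 2 * C) / e < real N" using N0 unfolding N_def by simp
    have N1: "N \<ge> 1" unfolding N_def by simp
    have "(2 * C * \<beta> + 2 * C) / real N \<le> e" using N e N1 by (simp add: field_simps)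
    then show "\<bar>cv h\<bar> \<le> 2 * F * C * \<beta> + e" using key[OF N1] by linarith
  qed
  then show ?thesis unfolding cv_def \<beta>_def .
qed

end


lemma stat_int:
  fixes Y :: "nat \<Rightarrow> 'a \<Rightarrow> real"
  assumes stat: "strictly_stationary M Y" and Ym: "\<And>i. Y i \<in> borel_measurable M"
    and G: "(G :: (nat \<Rightarrow> real) \<Rightarrow> real) \<in> borel_measurable (PiM {1..m} (\<lambda>_. borel))"
  shows "integral\<^sup>L M (\<lambda>\<omega>. G (\<lambda>i\<in>{1..m}. Y (i + k) \<omega>)) = integral\<^sup>L M (\<lambda>\<omega>. G (\<lambda>i\<in>{1..m}. Y i \<omega>))"
    and "integrable M (\<lambda>\<omega>. G (\<lambda>i\<in>{1..m}. Y (i + k) \<omega>)) = integrable M (\<lambda>\<omega>. G (\<lambda>i\<in>{1..m}. Y i \<omega>))"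
proof -
  have T1: "(\<lambda>\<omega>. \<lambda>i\<in>{1..m}. Y (i + k) \<omega>) \<in> measurable M (PiM {1..m} (\<lambda>_. borel))"
    using Ym by (intro measurable_restrict) auto
  have T2: "(\<lambda>\<omega>. \<lambda>i\<in>{1..m}. Y i \<omega>) \<in> measurable M (PiM {1..m} (\<lambda>_. borel))"
    using Ym by (intro measurable_restrict) auto
  have D: "distr M (PiM {1..m} (\<lambda>_. borel)) (\<lambda>\<omega>. \<lambda>i\<in>{1..m}. Y (i + k) \<omega>)
    = distr M (PiM {1..m} (\<lambda>_. borel)) (\<lambda>\<omega>. \<lambda>i\<in>{1..m}. Y i \<omega>)"
    using stat unfolding strictly_stationary_def by blast
  show "integral\<^sup>L M (\<lambda>\<omega>. G (\<lambda>i\<in>{1..m}. Y (i + k) \<omega>)) = integral\<^sup>L M (\<lambda>\<omega>. G (\<lambda>i\<in>{1..m}. Y i \<omega>))"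
    using integral_distr[OF T1 G, symmetric] integral_distr[OF T2 G] D by simp
  show "integrable M (\<lambda>\<omega>. G (\<lambda>i\<in>{1..m}. Y (i + k) \<omega>)) = integrable M (\<lambda>\<omega>. G (\<lambda>i\<in>{1..m}. Y i \<omega>))"
    using integrable_distr_eq[OF T1 G, symmetric] integrable_distr_eq[OF T2 G] D by simp
qed

lemma stat_pair:
  fixes Y :: "nat \<Rightarrow> 'a \<Rightarrow> real" and phi psi :: "real \<Rightarrow> real"
  assumes stat: "strictly_stationary M Y" and Ym: "\<And>i. Y i \<in> borel_measurable M"
    and phi: "phi \<in> borel_measurable borel" and psi: "psi \<in> borel_measurable borel"
    and ij: "1 \<le> i" "i \<le> j"
  shows "integral\<^sup>L M (\<lambda>\<omega>. phi (Y i \<omega>) * psi (Y j \<omega>)) = integral\<^sup>L M (\<lambda>\<omega>. phi (Y 1 \<omega>) * psi (Y (Suc (j - i)) \<omega>))"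
    and "integrable M (\<lambda>\<omega>. phi (Y i \<omega>) * psi (Y j \<omega>)) = integrable M (\<lambda>\<omega>. phi (Y 1 \<omega>) * psi (Y (Suc (j - i)) \<omega>))"
proof -
  define m where "m = Suc (j - i)"
  define G where "G = (\<lambda>w :: nat \<Rightarrow> real. phi (w 1) * psi (w m))"
  have G: "G \<in> borel_measurable (PiM {1..m} (\<lambda>_. borel))"
  proof -
    have c1: "(\<lambda>w :: nat \<Rightarrow> real. w 1) \<in> measurable (PiM {1..m} (\<lambda>_. borel)) borel"
      by (rule measurable_component_singleton) (simp add: m_def)
    have c2: "(\<lambda>w :: nat \<Rightarrow> real. w m) \<in> measurable (PiM {1..m} (\<lambda>_. borel)) borel"
      by (rule measurable_component_singleton) (simp add: m_def)
    show ?thesis unfolding G_def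
      by (rule borel_measurable_times) (rule measurable_compose[OF c1 phi], rule measurable_compose[OF c2 psi])
  qed
  have m1: "1 \<in> {1..m}" "m \<in> {1..m}" unfolding m_def by auto
  have e1: "G (\<lambda>ia\<in>{1..m}. Y (ia + (i - 1)) \<omega>) = phi (Y i \<omega>) * psi (Y j \<omega>)" for \<omega>
    unfolding G_def using m1 ij by (simp add: m_def)
  have e2: "G (\<lambda>ia\<in>{1..m}. Y ia \<omega>) = phi (Y 1 \<omega>) * psi (Y (Suc (j - i)) \<omega>)" for \<omega>
    unfolding G_def using m1 by (simp add: m_def)
  show "integral\<^sup>L M (\<lambda>\<omega>. phi (Y i \<omega>) * psi (Y j \<omega>)) = integral\<^sup>L M (\<lambda>\<omega>. phi (Y 1 \<omega>) * psi (Y (Suc (j - i)) \<omega>))"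
    using stat_int(1)[OF stat Ym G, of "i - 1"] unfolding e1 e2 .
  show "integrable M (\<lambda>\<omega>. phi (Y i \<omega>) * psi (Y j \<omega>)) = integrable M (\<lambda>\<omega>. phi (Y 1 \<omega>) * psi (Y (Suc (j - i)) \<omega>))"
    using stat_int(2)[OF stat Ym G, of "i - 1"] unfolding e1 e2 .
qed

lemma stat_single:
  fixes Y :: "nat \<Rightarrow> 'a \<Rightarrow> real" and phi :: "real \<Rightarrow> real"
  assumes stat: "strictly_stationary M Y" and Ym: "\<And>i. Y i \<in> borel_measurable M"
    and phi: "phi \<in> borel_measurable borel" and i: "1 \<le> i"
  shows "integral\<^sup>L M (\<lambda>\<omega>. phi (Y i \<omega>)) = integral\<^sup>L M (\<lambda>\<omega>. phi (Y 1 \<omega>))"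
    and "integrable M (\<lambda>\<omega>. phi (Y i \<omega>)) = integrable M (\<lambda>\<omega>. phi (Y 1 \<omega>))"
proof -
  have c: "(\<lambda>x. 1::real) \<in> borel_measurable borel" by simp
  show "integral\<^sup>L M (\<lambda>\<omega>. phi (Y i \<omega>)) = integral\<^sup>L M (\<lambda>\<omega>. phi (Y 1 \<omega>))"
    "integrable M (\<lambda>\<omega>. phi (Y i \<omega>)) = integrable M (\<lambda>\<omega>. phi (Y 1 \<omega>))"
    using stat_pair[OF stat Ym phi c, of i i] i by simp_all
qed


lemma young_ineq:
  fixes x z t :: real
  assumes "t > 0"
  shows "\<bar>x * z\<bar> \<le> (t * x\<^sup>2 + z\<^sup>2 / t) / 2"
proof -
  have "0 \<le> (t * \<bar>x\<bar> - \<bar>z\<bar>)\<^sup>2 / t" using assms by simp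
  also have "(t * \<bar>x\<bar> - \<bar>z\<bar>)\<^sup>2 / t = t * x\<^sup>2 - 2 * \<bar>x * z\<bar> + z\<^sup>2 / t"
    using assms by (simp add: power2_eq_square field_simps abs_mult)
  finally show ?thesis by simp
qed

context
  fixes M :: "'a measure"
  assumes P: "prob_space M"
begin

interpretation prob_space M by (rule P)

lemma L2_prod:
  fixes f g :: "'a \<Rightarrow> real"
  assumes [measurable]: "f \<in> borel_measurable M" "g \<in> borel_measurable M"
    and f2: "integrable M (\<lambda>x. (f x)\<^sup>2)" and g2: "integrable M (\<lambda>x. (g x)\<^sup>2)"
  shows "integrable M (\<lambda>x. f x * g x)"
    and "\<And>t. t > 0 \<Longrightarrow> \<bar>integral\<^sup>L M (\<lambda>x. f x * g x)\<bar> \<le> (t * integral\<^sup>L M (\<lambda>x. (f x)\<^sup>2) + integral\<^sup>L M (\<lambda>x. (g x)\<^sup>2) / t) / 2"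
proof -
  show i: "integrable M (\<lambda>x. f x * g x)"
  proof (rule Bochner_Integration.integrable_bound[of _ "\<lambda>x. ((f x)\<^sup>2 + (g x)\<^sup>2) / 2"])
    show "integrable M (\<lambda>x. ((f x)\<^sup>2 + (g x)\<^sup>2) / 2)" using f2 g2 by simp
    show "AE x in M. norm (f x * g x) \<le> norm (((f x)\<^sup>2 + (g x)\<^sup>2) / 2)"
      using young_ineq[of 1] by simp
  qed simp
  fix t :: real assume t: "t > 0"
  have "\<bar>integral\<^sup>L M (\<lambda>x. f x * g x)\<bar> \<le> integral\<^sup>L M (\<lambda>x. (t * (f x)\<^sup>2 + (g x)\<^sup>2 / t) / 2)"
    by (rule abs_integral_le[OF i]) (use f2 g2 young_ineq[OF t] in auto)
  also have "\<dots> = (t * integral\<^sup>L M (\<lambda>x. (f x)\<^sup>2) + integral\<^sup>L M (\<lambda>x. (g x)\<^sup>2) / t) / 2"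
    using f2 g2 by simp
  finally show "\<bar>integral\<^sup>L M (\<lambda>x. f x * g x)\<bar> \<le> (t * integral\<^sup>L M (\<lambda>x. (f x)\<^sup>2) + integral\<^sup>L M (\<lambda>x. (g x)\<^sup>2) / t) / 2" .
qed

lemma L2_int:
  fixes f :: "'a \<Rightarrow> real"
  assumes [measurable]: "f \<in> borel_measurable M" and f2: "integrable M (\<lambda>x. (f x)\<^sup>2)"
  shows "integrable M f"
    and "\<And>t. t > 0 \<Longrightarrow> \<bar>integral\<^sup>L M f\<bar> \<le> (t * integral\<^sup>L M (\<lambda>x. (f x)\<^sup>2) + 1 / t) / 2"
  using L2_prod[of f "\<lambda>_. 1", OF _ _ f2] by (simp_all add: prob_space)

end


lemma abs5:
  fixes a b c d e A B C D E :: real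
  assumes "\<bar>a\<bar> \<le> A" "\<bar>b\<bar> \<le> B" "\<bar>c\<bar> \<le> C" "\<bar>d\<bar> \<le> D" "\<bar>e\<bar> \<le> E"
  shows "\<bar>a + b + c - d - e\<bar> \<le> A + B + C + D + E"
  using assms by arith

lemma add3:
  fixes a b c e :: real
  assumes "a < e / 4" "b < e / 4" "c < e / 4" "0 < e"
  shows "a + b + c < e"
  using assms by linarith

lemma beta_m1:
  assumes P: "prob_space M" and Ym: "\<And>i. Y i \<in> borel_measurable M"
  shows "beta_coef M (gen_sigma M Y {1..1}) (gen_sigma M Y {k+1..}) \<le> beta_Y M Y k"
proof -
  have bdd: "bdd_above ((\<lambda>m. beta_coef M (gen_sigma M Y {1..m}) (gen_sigma M Y {k+m..})) ` {1..})"
    by (rule bdd_aboveI[of _ 1])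
      (use beta_coef_facts(1)[OF P gen_sigma_subalg[OF Ym] gen_sigma_subalg[OF Ym]] in auto)
  show ?thesis unfolding beta_Y_def
    using cSUP_upper[OF _ bdd, of 1] by simp
qed

lemma bcov_Y:
  fixes Y :: "nat \<Rightarrow> 'a \<Rightarrow> real" and phi psi :: "real \<Rightarrow> real"
  assumes P: "prob_space M" and Ym: "\<And>i. Y i \<in> borel_measurable M"
    and phi: "phi \<in> borel_measurable borel" and psi: "psi \<in> borel_measurable borel"
    and F: "\<And>x. \<bar>phi x\<bar> \<le> F" and C: "\<And>x. \<bar>psi x\<bar> \<le> C"
  shows "\<bar>integral\<^sup>L M (\<lambda>w. phi (Y 1 w) * psi (Y (Suc k) w)) - integral\<^sup>L M (\<lambda>w. phi (Y 1 w)) * integral\<^sup>L M (\<lambda>w. psi (Y (Suc k) w))\<bar>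
    \<le> 2 * F * C * beta_Y M Y k"
proof -
  have h: "(\<lambda>w. phi (Y 1 w)) \<in> borel_measurable (gen_sigma M Y {1..1})"
    by (rule measurable_compose[OF gen_sigma_meas[OF Ym] phi]) simp
  have g: "(\<lambda>w. psi (Y (Suc k) w)) \<in> borel_measurable (gen_sigma M Y {k+1..})"
    by (rule measurable_compose[OF gen_sigma_meas[OF Ym] psi]) simp
  have "\<bar>integral\<^sup>L M (\<lambda>w. phi (Y 1 w) * psi (Y (Suc k) w)) - integral\<^sup>L M (\<lambda>w. phi (Y 1 w)) * integral\<^sup>L M (\<lambda>w. psi (Y (Suc k) w))\<bar>
    \<le> 2 * F * C * beta_coef M (gen_sigma M Y {1..1}) (gen_sigma M Y {k+1..})"
    by (rule cov_bounded[OF P gen_sigma_subalg[OF Ym] gen_sigma_subalg[OF Ym] h F g C])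
  also have "\<dots> \<le> 2 * F * C * beta_Y M Y k"
  proof (rule mult_left_mono[OF beta_m1[OF P Ym]])
    show "0 \<le> 2 * F * C" using F[of 0] C[of 0] by simp
  qed
  finally show ?thesis .
qed


lemma cov_decay:
  fixes Y :: "nat \<Rightarrow> 'a \<Rightarrow> real" and phi :: "real \<Rightarrow> real"
  assumes P: "prob_space M" and Ym: "\<And>i. Y i \<in> borel_measurable M"
    and stat: "strictly_stationary M Y" and beta: "beta_Y M Y \<longlonglongrightarrow> 0"
    and phi[measurable]: "phi \<in> borel_measurable borel"
    and U2: "integrable M (\<lambda>w. (phi (Y 1 w))\<^sup>2)"
  shows "(\<lambda>k. integral\<^sup>L M (\<lambda>w. phi (Y 1 w) * phi (Y (Suc k) w)) - (integral\<^sup>L M (\<lambda>w. phi (Y 1 w)))\<^sup>2) \<longlonglongrightarrow> 0"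
proof -
  interpret prob_space M by (rule P)
  note Ym' [measurable] = Ym
  define pc where "pc c x = max (-c) (min c (phi x))" for c x :: real
  define r where "r c x = phi x - pc c x" for c x :: real
  have pcm[measurable]: "pc c \<in> borel_measurable borel" for c unfolding pc_def by measurable
  have rm[measurable]: "r c \<in> borel_measurable borel" for c unfolding r_def by measurable
  have pc_le: "\<bar>pc c x\<bar> \<le> \<bar>phi x\<bar>" if "c \<ge> 0" for c x using that unfolding pc_def by auto
  have pc_c: "\<bar>pc c x\<bar> \<le> c" if "c \<ge> 0" for c x using that unfolding pc_def by auto
  have r_le: "\<bar>r c x\<bar> \<le> \<bar>phi x\<bar>" if "c \<ge> 0" for c x using that unfolding r_def pc_def by auto
  have r0: "r c x = 0" if "\<bar>phi x\<bar> \<le> c" for c x using that unfolding r_def pc_def by auto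
  have st: "integral\<^sup>L M (\<lambda>w. g (Y (Suc k) w)) = integral\<^sup>L M (\<lambda>w. g (Y 1 w))"
    "integrable M (\<lambda>w. g (Y (Suc k) w)) = integrable M (\<lambda>w. g (Y 1 w))"
    if "g \<in> borel_measurable borel" for g :: "real \<Rightarrow> real" and k
    using stat_single[OF stat Ym that, of "Suc k"] by simp_all
  define S2 where "S2 = integral\<^sup>L M (\<lambda>w. (phi (Y 1 w))\<^sup>2)"
  define \<delta> where "\<delta> c = integral\<^sup>L M (\<lambda>w. (r c (Y 1 w))\<^sup>2)" for c
  have S2pos: "0 \<le> S2" unfolding S2_def by simp
  have pc2: "integrable M (\<lambda>w. (pc c (Y 1 w))\<^sup>2)" "integral\<^sup>L M (\<lambda>w. (pc c (Y 1 w))\<^sup>2) \<le> S2" if "c \<ge> 0" for c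
  proof -
    have b: "(pc c (Y 1 w))\<^sup>2 \<le> (phi (Y 1 w))\<^sup>2" for w
      using pc_le[OF that, of "Y 1 w"] by (simp add: abs_le_square_iff)
    show i: "integrable M (\<lambda>w. (pc c (Y 1 w))\<^sup>2)"
      by (rule Bochner_Integration.integrable_bound[OF U2]) (use b in auto)
    show "integral\<^sup>L M (\<lambda>w. (pc c (Y 1 w))\<^sup>2) \<le> S2" unfolding S2_def
      by (rule integral_mono[OF i U2]) (use b in auto)
  qed
  have r2: "integrable M (\<lambda>w. (r c (Y 1 w))\<^sup>2)" if "c \<ge> 0" for c
  proof -
    have b: "(r c (Y 1 w))\<^sup>2 \<le> (phi (Y 1 w))\<^sup>2" for w
      using r_le[OF that, of "Y 1 w"] by (simp add: abs_le_square_iff)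
    show ?thesis by (rule Bochner_Integration.integrable_bound[OF U2]) (use b in auto)
  qed
  have \<delta>lim: "(\<lambda>n. \<delta> (real n)) \<longlonglongrightarrow> 0"
  proof -
    have "(\<lambda>n. integral\<^sup>L M (\<lambda>w. (r (real n) (Y 1 w))\<^sup>2)) \<longlonglongrightarrow> integral\<^sup>L M (\<lambda>w. 0::real)"
    proof (rule integral_dominated_convergence[OF _ _ U2])
      show "AE w in M. (\<lambda>n. (r (real n) (Y 1 w))\<^sup>2) \<longlonglongrightarrow> 0"
      proof (rule AE_I2)
        fix w
        obtain N :: nat where N: "\<bar>phi (Y 1 w)\<bar> \<le> real N" using real_arch_simple by blast
        have "\<forall>n\<ge>N. (r (real n) (Y 1 w))\<^sup>2 = 0"
          using N by (auto intro!: r0)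
        then show "(\<lambda>n. (r (real n) (Y 1 w))\<^sup>2) \<longlonglongrightarrow> 0"
          by (intro tendsto_eventually) (auto simp: eventually_sequentially)
      qed
      show "AE w in M. norm ((r (real n) (Y 1 w))\<^sup>2) \<le> (phi (Y 1 w))\<^sup>2" for n
        using r_le[of "real n"] by (simp add: abs_le_square_iff)
    qed simp_all
    then show ?thesis unfolding \<delta>_def by simp
  qed
  have \<delta>pos: "0 \<le> \<delta> c" for c unfolding \<delta>_def by simp
  define B1 where "B1 = (1 + S2) / 2"
  have B1pos: "0 \<le> B1" unfolding B1_def using S2pos by simp
  have U1: "integrable M (\<lambda>w. phi (Y 1 w))" by (rule L2_int(1)[OF P _ U2]) simp
  show ?thesis
  proof (rule LIMSEQ_I)
    fix \<epsilon> :: real assume \<epsilon>: "\<epsilon> > 0"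
    define t where "t = 4 * (S2 + B1) / \<epsilon> + 1"
    have "0 \<le> 4 * (S2 + B1) / \<epsilon>" using S2pos B1pos \<epsilon> by simp
    then have tpos: "t > 0" unfolding t_def by linarith
    have t2: "(S2 + B1) / t < \<epsilon> / 4"
    proof -
      have "S2 + B1 < \<epsilon> / 4 * t" unfolding t_def using \<epsilon> S2pos B1pos by (simp add: field_simps)
      then show ?thesis using tpos by (simp add: divide_less_eq)
    qed
    have "eventually (\<lambda>n. \<delta> (real n) < \<epsilon> / (4 * t * (1 + B1))) sequentially"
      using \<delta>lim tpos B1pos \<epsilon> by (intro order_tendstoD(2)) (auto intro: divide_pos_pos)
    then obtain n :: nat where n: "\<delta> (real n) < \<epsilon> / (4 * t * (1 + B1))"
      by (auto simp: eventually_sequentially)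
    define c where "c = real n"
    have c0: "c \<ge> 0" unfolding c_def by simp
    have D: "0 < 4 * t * (1 + B1)" using tpos B1pos by simp
    have X: "\<delta> c * (4 * t * (1 + B1)) < \<epsilon>" using n D unfolding c_def by (simp add: pos_less_divide_eq)
    have eq: "t * \<delta> c * (1 + B1) = \<delta> c * (4 * t * (1 + B1)) / 4" by simp
    have t1: "t * \<delta> c * (1 + B1) < \<epsilon> / 4" using X unfolding eq by linarith
    have "eventually (\<lambda>k. 2 * c * c * beta_Y M Y k < \<epsilon> / 4) sequentially"
    proof -
      have "(\<lambda>k. 2 * c * c * beta_Y M Y k) \<longlonglongrightarrow> 2 * c * c * 0"
        by (intro tendsto_mult tendsto_const beta)
      then show ?thesis using \<epsilon> by (intro order_tendstoD(2)) auto
    qed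
    then obtain N where N: "\<And>k. k \<ge> N \<Longrightarrow> 2 * c * c * beta_Y M Y k < \<epsilon> / 4"
      by (auto simp: eventually_sequentially)
    show "\<exists>no. \<forall>k\<ge>no. norm (integral\<^sup>L M (\<lambda>w. phi (Y 1 w) * phi (Y (Suc k) w)) - (integral\<^sup>L M (\<lambda>w. phi (Y 1 w)))\<^sup>2 - 0) < \<epsilon>"
    proof (intro exI allI impI)
      fix k assume k: "k \<ge> N"
      define U where "U w = phi (Y 1 w)" for w
      define V where "V w = phi (Y (Suc k) w)" for w
      define Uc where "Uc w = pc c (Y 1 w)" for w
      define Vc where "Vc w = pc c (Y (Suc k) w)" for w
      define RU where "RU w = r c (Y 1 w)" for w
      define RV where "RV w = r c (Y (Suc k) w)" for w
      have [measurable]: "U \<in> borel_measurable M" "V \<in> borel_measurable M" "Uc \<in> borel_measurable M"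
        "Vc \<in> borel_measurable M" "RU \<in> borel_measurable M" "RV \<in> borel_measurable M"
        unfolding U_def V_def Uc_def Vc_def RU_def RV_def by measurable
      have sq: "(\<lambda>x. (g x)\<^sup>2) \<in> borel_measurable borel" if "g \<in> borel_measurable borel" for g :: "real \<Rightarrow> real"
        using that by measurable
      have U2': "integrable M (\<lambda>w. (U w)\<^sup>2)" using U2 unfolding U_def .
      have V2: "integrable M (\<lambda>w. (V w)\<^sup>2)" "integral\<^sup>L M (\<lambda>w. (V w)\<^sup>2) = S2"
        unfolding V_def S2_def using st[OF sq[OF phi], of k] U2 by auto
      have Uc2: "integrable M (\<lambda>w. (Uc w)\<^sup>2)" "integral\<^sup>L M (\<lambda>w. (Uc w)\<^sup>2) \<le> S2"
        unfolding Uc_def using pc2[OF c0] by auto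
      have Vc2: "integrable M (\<lambda>w. (Vc w)\<^sup>2)" "integral\<^sup>L M (\<lambda>w. (Vc w)\<^sup>2) \<le> S2"
        unfolding Vc_def using st[OF sq[OF pcm], of c k] pc2[OF c0] by auto
      have RU2: "integrable M (\<lambda>w. (RU w)\<^sup>2)" "integral\<^sup>L M (\<lambda>w. (RU w)\<^sup>2) = \<delta> c"
        unfolding RU_def \<delta>_def using r2[OF c0] by auto
      have RV2: "integrable M (\<lambda>w. (RV w)\<^sup>2)" "integral\<^sup>L M (\<lambda>w. (RV w)\<^sup>2) = \<delta> c"
        unfolding RV_def \<delta>_def using st[OF sq[OF rm], of c k] r2[OF c0] by auto
      have EV: "integral\<^sup>L M V = integral\<^sup>L M U"
        unfolding U_def V_def using st[OF phi, of k] by simp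
      have iU: "integrable M U" using L2_int(1)[OF P _ U2'] by simp
      have iV: "integrable M V" using L2_int(1)[OF P _ V2(1)] by simp
      have iUc: "integrable M Uc" using L2_int(1)[OF P _ Uc2(1)] by simp
      have iVc: "integrable M Vc" using L2_int(1)[OF P _ Vc2(1)] by simp
      have iRU: "integrable M RU" using L2_int(1)[OF P _ RU2(1)] by simp
      have iRV: "integrable M RV" using L2_int(1)[OF P _ RV2(1)] by simp
      have iUcVc: "integrable M (\<lambda>w. Uc w * Vc w)" using L2_prod(1)[OF P _ _ Uc2(1) Vc2(1)] by simp
      have iRUV: "integrable M (\<lambda>w. RU w * V w)" using L2_prod(1)[OF P _ _ RU2(1) V2(1)] by simp
      have iRVUc: "integrable M (\<lambda>w. RV w * Uc w)" using L2_prod(1)[OF P _ _ RV2(1) Uc2(1)] by simp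
      have dU: "U w = Uc w + RU w" for w unfolding U_def Uc_def RU_def r_def by simp
      have dV: "V w = Vc w + RV w" for w unfolding V_def Vc_def RV_def r_def by simp
      have prod: "U w * V w = Uc w * Vc w + RU w * V w + RV w * Uc w" for w
        using dU[of w] dV[of w] by (simp add: algebra_simps)
      have EUV: "integral\<^sup>L M (\<lambda>w. U w * V w) = integral\<^sup>L M (\<lambda>w. Uc w * Vc w) + integral\<^sup>L M (\<lambda>w. RU w * V w) + integral\<^sup>L M (\<lambda>w. RV w * Uc w)"
        unfolding prod using iUcVc iRUV iRVUc by simp
      have EU: "integral\<^sup>L M U = integral\<^sup>L M Uc + integral\<^sup>L M RU"
      proof -
        have "U = (\<lambda>w. Uc w + RU w)" by (rule ext) (rule dU)
        then show ?thesis using iUc iRU by simp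
      qed
      have EV': "integral\<^sup>L M V = integral\<^sup>L M Vc + integral\<^sup>L M RV"
      proof -
        have "V = (\<lambda>w. Vc w + RV w)" by (rule ext) (rule dV)
        then show ?thesis using iVc iRV by simp
      qed
      have gam: "integral\<^sup>L M (\<lambda>w. U w * V w) - integral\<^sup>L M U * integral\<^sup>L M V
        = (integral\<^sup>L M (\<lambda>w. Uc w * Vc w) - integral\<^sup>L M Uc * integral\<^sup>L M Vc)
          + integral\<^sup>L M (\<lambda>w. RU w * V w) + integral\<^sup>L M (\<lambda>w. RV w * Uc w)
          - integral\<^sup>L M RU * integral\<^sup>L M V - integral\<^sup>L M Uc * integral\<^sup>L M RV"
        unfolding EUV EU EV' by (simp add: algebra_simps)
      have b1: "\<bar>integral\<^sup>L M (\<lambda>w. Uc w * Vc w) - integral\<^sup>L M Uc * integral\<^sup>L M Vc\<bar> \<le> 2 * c * c * beta_Y M Y k"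
        unfolding Uc_def Vc_def by (rule bcov_Y[OF P Ym pcm pcm]) (use pc_c[OF c0] in auto)
      have b2: "\<bar>integral\<^sup>L M (\<lambda>w. RU w * V w)\<bar> \<le> (t * \<delta> c + S2 / t) / 2"
        using L2_prod(2)[OF P _ _ RU2(1) V2(1) tpos] RU2(2) V2(2) by simp
      have b3: "\<bar>integral\<^sup>L M (\<lambda>w. RV w * Uc w)\<bar> \<le> (t * \<delta> c + S2 / t) / 2"
      proof -
        have "\<bar>integral\<^sup>L M (\<lambda>w. RV w * Uc w)\<bar> \<le> (t * \<delta> c + integral\<^sup>L M (\<lambda>w. (Uc w)\<^sup>2) / t) / 2"
          using L2_prod(2)[OF P _ _ RV2(1) Uc2(1) tpos] RV2(2) by simp
        also have "\<dots> \<le> (t * \<delta> c + S2 / t) / 2"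
          using Uc2(2) tpos by (simp add: divide_right_mono)
        finally show ?thesis .
      qed
      have bR: "\<bar>integral\<^sup>L M RU\<bar> \<le> (t * \<delta> c + 1 / t) / 2" "\<bar>integral\<^sup>L M RV\<bar> \<le> (t * \<delta> c + 1 / t) / 2"
        using L2_int(2)[OF P _ RU2(1) tpos] RU2(2) L2_int(2)[OF P _ RV2(1) tpos] RV2(2) by simp_all
      have bV: "\<bar>integral\<^sup>L M V\<bar> \<le> B1" "\<bar>integral\<^sup>L M Uc\<bar> \<le> B1"
        using L2_int(2)[OF P _ V2(1), of 1] V2(2) L2_int(2)[OF P _ Uc2(1), of 1] Uc2(2)
        unfolding B1_def by simp_all
      have tdpos: "0 \<le> t * \<delta> c + 1 / t"
        using tpos \<delta>pos[of c] by (intro add_nonneg_nonneg mult_nonneg_nonneg) auto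
      have b4: "\<bar>integral\<^sup>L M RU * integral\<^sup>L M V\<bar> \<le> (t * \<delta> c + 1 / t) / 2 * B1"
        unfolding abs_mult by (rule mult_mono[OF bR(1) bV(1)]) (use tdpos in auto)
      have b5: "\<bar>integral\<^sup>L M Uc * integral\<^sup>L M RV\<bar> \<le> B1 * ((t * \<delta> c + 1 / t) / 2)"
        unfolding abs_mult by (rule mult_mono[OF bV(2) bR(2)]) (use B1pos tdpos in auto)
      have "\<bar>integral\<^sup>L M (\<lambda>w. U w * V w) - integral\<^sup>L M U * integral\<^sup>L M V\<bar>
          \<le> 2 * c * c * beta_Y M Y k + t * \<delta> c * (1 + B1) + (S2 + B1) / t"
      proof -
        have R: "2 * c * c * beta_Y M Y k + (t * \<delta> c + S2 / t) / 2 + (t * \<delta> c + S2 / t) / 2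
            + (t * \<delta> c + 1 / t) / 2 * B1 + B1 * ((t * \<delta> c + 1 / t) / 2)
            = 2 * c * c * beta_Y M Y k + t * \<delta> c * (1 + B1) + (S2 + B1) / t"
          using tpos by (simp add: field_simps)
        show ?thesis unfolding gam R[symmetric] by (rule abs5[OF b1 b2 b3 b4 b5])
      qed
      also have "\<dots> < \<epsilon>" by (rule add3[OF N[OF k] t1 t2 \<epsilon>])
      finally show "norm (integral\<^sup>L M (\<lambda>w. phi (Y 1 w) * phi (Y (Suc k) w)) - (integral\<^sup>L M (\<lambda>w. phi (Y 1 w)))\<^sup>2 - 0) < \<epsilon>"
        using EV unfolding U_def V_def by (simp add: power2_eq_square)
    qed
  qed
qed


definition ndist :: "nat \<Rightarrow> nat \<Rightarrow> nat" where
  "ndist i j = (if i \<le> j then j - i else i - j)"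

lemma sum_reindex_le:
  fixes H :: "nat \<Rightarrow> real"
  assumes "inj_on f A" "f ` A \<subseteq> B" "finite B" "\<And>d. 0 \<le> H d"
  shows "(\<Sum>j\<in>A. H (f j)) \<le> (\<Sum>d\<in>B. H d)"
proof -
  have "(\<Sum>j\<in>A. H (f j)) = (\<Sum>d\<in>f ` A. H d)" using sum.reindex[OF assms(1), of H] by simp
  also have "\<dots> \<le> (\<Sum>d\<in>B. H d)" by (rule sum_mono2) (use assms in auto)
  finally show ?thesis .
qed

lemma dist_sum_row:
  fixes H :: "nat \<Rightarrow> real"
  assumes H: "\<And>d. 0 \<le> H d" and i: "i \<in> {p+1..p+L}"
  shows "(\<Sum>j\<in>{p+1..p+L}. H (ndist i j)) \<le> 2 * (\<Sum>d<L. H d)"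
proof -
  let ?S = "{p+1..p+L}"
  have split: "(\<Sum>j\<in>?S. H (ndist i j)) \<le> (\<Sum>j\<in>{j\<in>?S. j \<le> i}. H (i - j)) + (\<Sum>j\<in>{j\<in>?S. i \<le> j}. H (j - i))"
  proof -
    have "(\<Sum>j\<in>?S. H (ndist i j)) \<le> (\<Sum>j\<in>?S. (if j \<le> i then H (i - j) else 0) + (if i \<le> j then H (j - i) else 0))"
      by (rule sum_mono) (use H in \<open>auto simp: ndist_def\<close>)
    also have "\<dots> = (\<Sum>j\<in>?S. (if j \<le> i then H (i - j) else 0)) + (\<Sum>j\<in>?S. (if i \<le> j then H (j - i) else 0))"
      by (rule sum.distrib)
    also have "(\<Sum>j\<in>?S. (if j \<le> i then H (i - j) else 0)) = (\<Sum>j\<in>{j\<in>?S. j \<le> i}. H (i - j))"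
      by (simp add: sum.If_cases Int_def conj_commute)
    also have "(\<Sum>j\<in>?S. (if i \<le> j then H (j - i) else 0)) = (\<Sum>j\<in>{j\<in>?S. i \<le> j}. H (j - i))"
      by (simp add: sum.If_cases Int_def conj_commute)
    finally show ?thesis .
  qed
  have a: "(\<Sum>j\<in>{j\<in>?S. j \<le> i}. H (i - j)) \<le> (\<Sum>d<L. H d)"
    by (rule sum_reindex_le[OF _ _ _ H]) (use i in \<open>auto simp: inj_on_def\<close>)
  have b: "(\<Sum>j\<in>{j\<in>?S. i \<le> j}. H (j - i)) \<le> (\<Sum>d<L. H d)"
    by (rule sum_reindex_le[OF _ _ _ H]) (use i in \<open>auto simp: inj_on_def\<close>)
  show ?thesis using split a b by linarith
qed

lemma dist_sum_bound:
  fixes H :: "nat \<Rightarrow> real"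
  assumes H: "\<And>d. 0 \<le> H d"
  shows "(\<Sum>i\<in>{p+1..p+L}. \<Sum>j\<in>{p+1..p+L}. H (ndist i j)) \<le> 2 * real L * (\<Sum>d<L. H d)"
proof -
  have "(\<Sum>i\<in>{p+1..p+L}. \<Sum>j\<in>{p+1..p+L}. H (ndist i j)) \<le> (\<Sum>i\<in>{p+1..p+L}. 2 * (\<Sum>d<L. H d))"
    by (rule sum_mono) (rule dist_sum_row[OF H])
  also have "\<dots> = 2 * real L * (\<Sum>d<L. H d)" by simp
  finally show ?thesis .
qed

lemma cesaro_abs:
  fixes g :: "nat \<Rightarrow> real"
  assumes "g \<longlonglongrightarrow> 0"
  shows "(\<lambda>L. (\<Sum>d<L. \<bar>g d\<bar>) / real L) \<longlonglongrightarrow> 0"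
proof (rule LIMSEQ_I)
  fix e :: real assume e: "e > 0"
  obtain D where D: "\<And>d. d \<ge> D \<Longrightarrow> \<bar>g d\<bar> < e / 2"
    using LIMSEQ_D[OF assms, of "e/2"] e by auto
  define A where "A = (\<Sum>d<D. \<bar>g d\<bar>)"
  have A0: "0 \<le> A" unfolding A_def by (simp add: sum_nonneg)
  obtain N :: nat where N: "2 * A / e < real N" using reals_Archimedean2 by blast
  show "\<exists>no. \<forall>L\<ge>no. norm ((\<Sum>d<L. \<bar>g d\<bar>) / real L - 0) < e"
  proof (intro exI[of _ "Suc N"] allI impI)
    fix L assume L: "L \<ge> Suc N"
    then have Lpos: "real L > 0" by simp
    have "(\<Sum>d<L. \<bar>g d\<bar>) \<le> (\<Sum>d<L. (if d < D then \<bar>g d\<bar> else 0) + e / 2)"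
    proof (rule sum_mono)
      fix d assume "d \<in> {..<L}"
      show "\<bar>g d\<bar> \<le> (if d < D then \<bar>g d\<bar> else 0) + e / 2"
        using D[of d] e by (cases "d < D") auto
    qed
    also have "\<dots> = (\<Sum>d<L. (if d < D then \<bar>g d\<bar> else 0)) + real L * (e / 2)"
      by (simp add: sum.distrib)
    also have "(\<Sum>d<L. (if d < D then \<bar>g d\<bar> else 0)) \<le> A"
    proof -
      have "(\<Sum>d<L. (if d < D then \<bar>g d\<bar> else 0)) = (\<Sum>d\<in>{..<L} \<inter> {..<D}. \<bar>g d\<bar>)"
        by (simp add: sum.If_cases Int_def)
      also have "\<dots> \<le> A" unfolding A_def by (rule sum_mono2) auto
      finally show ?thesis .
    qed
    finally have s: "(\<Sum>d<L. \<bar>g d\<bar>) \<le> A + real L * (e / 2)" by simp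
    have "A < real L * (e / 2)"
    proof -
      have "2 * A / e < real L" using N L by linarith
      then show ?thesis using e by (simp add: field_simps)
    qed
    then have "(\<Sum>d<L. \<bar>g d\<bar>) < real L * e" using s by linarith
    then have "(\<Sum>d<L. \<bar>g d\<bar>) / real L < e" using Lpos by (simp add: divide_less_eq mult.commute)
    moreover have "0 \<le> (\<Sum>d<L. \<bar>g d\<bar>) / real L" by (simp add: sum_nonneg)
    ultimately show "norm ((\<Sum>d<L. \<bar>g d\<bar>) / real L - 0) < e" by simp
  qed
qed

lemma powr_large:
  assumes a: "a > 0"
  shows "\<exists>N. \<forall>n\<ge>N. B \<le> real n powr a"
proof -
  define B' where "B' = max B 1"
  obtain N :: nat where N: "B' powr (1 / a) \<le> real N" using real_arch_simple by blast
  have "B \<le> real n powr a" if n: "n \<ge> N" for n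
  proof -
    have B'pos: "B' > 0" unfolding B'_def by simp
    have "B' = (B' powr (1 / a)) powr a" using a B'pos by (simp add: powr_powr)
    also have "\<dots> \<le> real n powr a"
      using N n a by (intro powr_mono2) auto
    finally show ?thesis unfolding B'_def by simp
  qed
  then show ?thesis by blast
qed


lemma sq_sum_bound:
  fixes Z :: "nat \<Rightarrow> 'a \<Rightarrow> real" and w :: "nat \<Rightarrow> real" and G :: "nat \<Rightarrow> nat \<Rightarrow> real"
  assumes S: "finite S"
    and int: "\<And>i j. i \<in> S \<Longrightarrow> j \<in> S \<Longrightarrow> integrable M (\<lambda>x. Z i x * Z j x)"
    and bnd: "\<And>i j. i \<in> S \<Longrightarrow> j \<in> S \<Longrightarrow> \<bar>integral\<^sup>L M (\<lambda>x. Z i x * Z j x)\<bar> \<le> G i j"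
  shows "integrable M (\<lambda>x. (\<Sum>i\<in>S. w i * Z i x)\<^sup>2)"
    and "integral\<^sup>L M (\<lambda>x. (\<Sum>i\<in>S. w i * Z i x)\<^sup>2) \<le> (\<Sum>i\<in>S. \<Sum>j\<in>S. \<bar>w i\<bar> * \<bar>w j\<bar> * G i j)"
proof -
  have eq: "(\<Sum>i\<in>S. w i * Z i x)\<^sup>2 = (\<Sum>i\<in>S. \<Sum>j\<in>S. (w i * w j) * (Z i x * Z j x))" for x
    unfolding power2_eq_square sum_product by (simp add: algebra_simps)
  have i2: "integrable M (\<lambda>x. (w i * w j) * (Z i x * Z j x))" if "i \<in> S" "j \<in> S" for i j
    using int[OF that] by simp
  show "integrable M (\<lambda>x. (\<Sum>i\<in>S. w i * Z i x)\<^sup>2)"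
    unfolding eq by (intro Bochner_Integration.integrable_sum i2)
  have "integral\<^sup>L M (\<lambda>x. (\<Sum>i\<in>S. w i * Z i x)\<^sup>2) = (\<Sum>i\<in>S. \<Sum>j\<in>S. (w i * w j) * integral\<^sup>L M (\<lambda>x. Z i x * Z j x))"
    unfolding eq
    apply (subst Bochner_Integration.integral_sum)
     apply (intro Bochner_Integration.integrable_sum i2; assumption)
    apply (rule sum.cong[OF refl])
    apply (subst Bochner_Integration.integral_sum)
    using i2 by auto
  also have "\<dots> \<le> (\<Sum>i\<in>S. \<Sum>j\<in>S. \<bar>w i\<bar> * \<bar>w j\<bar> * G i j)"
  proof (intro sum_mono)
    fix i j assume ij: "i \<in> S" "j \<in> S"
    have "(w i * w j) * integral\<^sup>L M (\<lambda>x. Z i x * Z j x) \<le> \<bar>(w i * w j) * integral\<^sup>L M (\<lambda>x. Z i x * Z j x)\<bar>" by simp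
    also have "\<dots> = \<bar>w i\<bar> * \<bar>w j\<bar> * \<bar>integral\<^sup>L M (\<lambda>x. Z i x * Z j x)\<bar>" by (simp add: abs_mult)
    also have "\<dots> \<le> \<bar>w i\<bar> * \<bar>w j\<bar> * G i j" by (intro mult_left_mono bnd ij) simp
    finally show "(w i * w j) * integral\<^sup>L M (\<lambda>x. Z i x * Z j x) \<le> \<bar>w i\<bar> * \<bar>w j\<bar> * G i j" .
  qed
  finally show "integral\<^sup>L M (\<lambda>x. (\<Sum>i\<in>S. w i * Z i x)\<^sup>2) \<le> (\<Sum>i\<in>S. \<Sum>j\<in>S. \<bar>w i\<bar> * \<bar>w j\<bar> * G i j)" .
qed


lemma alg1: "(n::real) > 0 \<Longrightarrow> (a / n) * (a / n) * (2 * n * S) = 2 * (a * a) * (S / n)"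
  by (simp add: field_simps power2_eq_square)

context
  fixes M :: "'a measure" and Y :: "nat \<Rightarrow> 'a \<Rightarrow> real"
  assumes P: "prob_space M" and meas: "\<And>i. Y i \<in> borel_measurable M"
    and stat: "strictly_stationary M Y"
    and var1: "integral\<^sup>L M (\<lambda>\<omega>. (Y 1 \<omega>)^2) = 1"
    and Y4: "integrable M (\<lambda>\<omega>. (Y 1 \<omega>)^4)"
begin

interpretation prob_space M by (rule P)

lemma sqm: "(\<lambda>x::real. x\<^sup>2) \<in> borel_measurable borel" by simp

lemma Y2int: "i \<ge> 1 \<Longrightarrow> integrable M (\<lambda>\<omega>. (Y i \<omega>)\<^sup>2)"
  using stat_single(2)[OF stat meas sqm, of i] var1 not_integrable_integral_eq by fastforce

lemma EY2: "i \<ge> 1 \<Longrightarrow> integral\<^sup>L M (\<lambda>\<omega>. (Y i \<omega>)\<^sup>2) = 1"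
  using stat_single(1)[OF stat meas sqm, of i] var1 by simp

lemma Y4int: "i \<ge> 1 \<Longrightarrow> integrable M (\<lambda>\<omega>. ((Y i \<omega>)\<^sup>2)\<^sup>2)"
proof -
  assume i: "i \<ge> 1"
  have m: "(\<lambda>x::real. x^4) \<in> borel_measurable borel" by simp
  have "integrable M (\<lambda>\<omega>. (Y i \<omega>)^4)" using stat_single(2)[OF stat meas m i] Y4 by simp
  then show ?thesis by (simp add: power_mult[symmetric])
qed

definition "cY d = integral\<^sup>L M (\<lambda>\<omega>. Y 1 \<omega> * Y (Suc d) \<omega>)"
definition "dY d = integral\<^sup>L M (\<lambda>\<omega>. (Y 1 \<omega>)\<^sup>2 * (Y (Suc d) \<omega>)\<^sup>2) - 1"

lemma prodY:
  assumes "1 \<le> i" "1 \<le> j"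
  shows "integrable M (\<lambda>\<omega>. Y i \<omega> * Y j \<omega>)" "integral\<^sup>L M (\<lambda>\<omega>. Y i \<omega> * Y j \<omega>) = cY (ndist i j)"
proof -
  show "integrable M (\<lambda>\<omega>. Y i \<omega> * Y j \<omega>)"
    by (rule L2_prod(1)[OF P meas meas Y2int Y2int]) (use assms in auto)
  have idm: "(\<lambda>x::real. x) \<in> borel_measurable borel" by simp
  show "integral\<^sup>L M (\<lambda>\<omega>. Y i \<omega> * Y j \<omega>) = cY (ndist i j)"
  proof (cases "i \<le> j")
    case True
    then show ?thesis using stat_pair(1)[OF stat meas idm idm assms(1) True]
      unfolding cY_def ndist_def by simp
  next
    case False
    then have "integral\<^sup>L M (\<lambda>\<omega>. Y j \<omega> * Y i \<omega>) = cY (i - j)"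
      using stat_pair(1)[OF stat meas idm idm assms(2), of i] unfolding cY_def by simp
    then show ?thesis using False unfolding ndist_def by (simp add: mult.commute)
  qed
qed

lemma prodY2:
  assumes "1 \<le> i" "1 \<le> j"
  shows "integrable M (\<lambda>\<omega>. ((Y i \<omega>)\<^sup>2 - 1) * ((Y j \<omega>)\<^sup>2 - 1))"
    "integral\<^sup>L M (\<lambda>\<omega>. ((Y i \<omega>)\<^sup>2 - 1) * ((Y j \<omega>)\<^sup>2 - 1)) = dY (ndist i j)"
proof -
  have m2: "(\<lambda>\<omega>. (Y k \<omega>)\<^sup>2) \<in> borel_measurable M" for k using meas[of k] by measurable
  have pi: "integrable M (\<lambda>\<omega>. (Y i \<omega>)\<^sup>2 * (Y j \<omega>)\<^sup>2)"
    by (rule L2_prod(1)[OF P m2 m2 Y4int Y4int]) (use assms in auto)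
  have eq: "((Y i \<omega>)\<^sup>2 - 1) * ((Y j \<omega>)\<^sup>2 - 1) = (Y i \<omega>)\<^sup>2 * (Y j \<omega>)\<^sup>2 - (Y i \<omega>)\<^sup>2 - (Y j \<omega>)\<^sup>2 + 1" for \<omega>
    by (simp add: algebra_simps)
  show "integrable M (\<lambda>\<omega>. ((Y i \<omega>)\<^sup>2 - 1) * ((Y j \<omega>)\<^sup>2 - 1))"
    unfolding eq using pi Y2int assms by simp
  have I: "integral\<^sup>L M (\<lambda>\<omega>. ((Y i \<omega>)\<^sup>2 - 1) * ((Y j \<omega>)\<^sup>2 - 1)) = integral\<^sup>L M (\<lambda>\<omega>. (Y i \<omega>)\<^sup>2 * (Y j \<omega>)\<^sup>2) - 1"
    unfolding eq using pi Y2int[of i] Y2int[of j] EY2[of i] EY2[of j] assms by (simp add: prob_space)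
  show "integral\<^sup>L M (\<lambda>\<omega>. ((Y i \<omega>)\<^sup>2 - 1) * ((Y j \<omega>)\<^sup>2 - 1)) = dY (ndist i j)"
  proof (cases "i \<le> j")
    case True
    then show ?thesis using I stat_pair(1)[OF stat meas sqm sqm assms(1) True]
      unfolding dY_def ndist_def by simp
  next
    case False
    then have "integral\<^sup>L M (\<lambda>\<omega>. (Y j \<omega>)\<^sup>2 * (Y i \<omega>)\<^sup>2) = dY (i - j) + 1"
      using stat_pair(1)[OF stat meas sqm sqm assms(2), of i] unfolding dY_def by simp
    then show ?thesis using False I unfolding ndist_def by (simp add: mult.commute)
  qed
qed

lemma var_T:
  fixes a :: "nat \<Rightarrow> real"
  assumes n: "n \<ge> 1" and K: "\<And>i. i \<in> {1..n} \<Longrightarrow> \<bar>a i\<bar> \<le> K"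
  shows "integrable M (\<lambda>\<omega>. (\<Sum>i\<in>{1..n}. ((a i)\<^sup>2 / real n) * ((Y i \<omega>)\<^sup>2 - 1))\<^sup>2)"
    and "integral\<^sup>L M (\<lambda>\<omega>. (\<Sum>i\<in>{1..n}. ((a i)\<^sup>2 / real n) * ((Y i \<omega>)\<^sup>2 - 1))\<^sup>2)
         \<le> 2 * K^4 * ((\<Sum>d<n. \<bar>dY d\<bar>) / real n)"
proof -
  let ?Z = "\<lambda>i \<omega>. (Y i \<omega>)\<^sup>2 - 1"
  have S: "{1..n} = {0+1..0+n}" by simp
  note sb = sq_sum_bound[of "{1..n}" M ?Z "\<lambda>i j. \<bar>dY (ndist i j)\<bar>" "\<lambda>i. (a i)\<^sup>2 / real n"]
  have h1: "\<And>i j. i \<in> {1..n} \<Longrightarrow> j \<in> {1..n} \<Longrightarrow> integrable M (\<lambda>x. ?Z i x * ?Z j x)"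
    using prodY2(1) by auto
  have h2: "\<And>i j. i \<in> {1..n} \<Longrightarrow> j \<in> {1..n} \<Longrightarrow> \<bar>integral\<^sup>L M (\<lambda>x. ?Z i x * ?Z j x)\<bar> \<le> \<bar>dY (ndist i j)\<bar>"
    using prodY2(2) by auto
  show "integrable M (\<lambda>\<omega>. (\<Sum>i\<in>{1..n}. ((a i)\<^sup>2 / real n) * ((Y i \<omega>)\<^sup>2 - 1))\<^sup>2)"
    using sb(1)[OF _ h1 h2] by simp
  have qK: "\<bar>(a k)\<^sup>2 / real n\<bar> \<le> K\<^sup>2 / real n" if "k \<in> {1..n}" for k
  proof -
    have "\<bar>a k\<bar>^2 \<le> K^2" using K[OF that] by (intro power_mono) auto
    then have "(a k)\<^sup>2 \<le> K\<^sup>2" by simp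
    then show ?thesis by (simp add: divide_right_mono)
  qed
  have "integral\<^sup>L M (\<lambda>\<omega>. (\<Sum>i\<in>{1..n}. ((a i)\<^sup>2 / real n) * ((Y i \<omega>)\<^sup>2 - 1))\<^sup>2)
     \<le> (\<Sum>i\<in>{1..n}. \<Sum>j\<in>{1..n}. \<bar>(a i)\<^sup>2 / real n\<bar> * \<bar>(a j)\<^sup>2 / real n\<bar> * \<bar>dY (ndist i j)\<bar>)"
    using sb(2)[OF _ h1 h2] by simp
  also have "\<dots> \<le> (\<Sum>i\<in>{1..n}. \<Sum>j\<in>{1..n}. (K\<^sup>2 / real n) * (K\<^sup>2 / real n) * \<bar>dY (ndist i j)\<bar>)"
  proof (intro sum_mono mult_right_mono mult_mono)
    fix i j assume ij: "i \<in> {1..n}" "j \<in> {1..n}"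
    show "\<bar>(a i)\<^sup>2 / real n\<bar> \<le> K\<^sup>2 / real n" "\<bar>(a j)\<^sup>2 / real n\<bar> \<le> K\<^sup>2 / real n"
      using qK ij by auto
    show "0 \<le> K\<^sup>2 / real n" by simp
  qed auto
  also have "\<dots> = (K\<^sup>2 / real n) * (K\<^sup>2 / real n) * (\<Sum>i\<in>{0+1..0+n}. \<Sum>j\<in>{0+1..0+n}. \<bar>dY (ndist i j)\<bar>)"
    by (simp add: sum_distrib_left)
  also have "\<dots> \<le> (K\<^sup>2 / real n) * (K\<^sup>2 / real n) * (2 * real n * (\<Sum>d<n. \<bar>dY d\<bar>))"
    by (intro mult_left_mono dist_sum_bound) auto
  also have "\<dots> = 2 * K^4 * ((\<Sum>d<n. \<bar>dY d\<bar>) / real n)"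
    using alg1[of "real n" "K\<^sup>2"] n by (simp add: power2_eq_square power4_eq_xxxx mult.assoc)
  finally show "integral\<^sup>L M (\<lambda>\<omega>. (\<Sum>i\<in>{1..n}. ((a i)\<^sup>2 / real n) * ((Y i \<omega>)\<^sup>2 - 1))\<^sup>2)
         \<le> 2 * K^4 * ((\<Sum>d<n. \<bar>dY d\<bar>) / real n)" .
qed

lemma var_A:
  fixes b :: "nat \<Rightarrow> real"
  assumes l: "l \<ge> 1" and K: "\<And>r. r \<in> {p+1..p+l} \<Longrightarrow> \<bar>b r\<bar> \<le> K"
  shows "integrable M (\<lambda>\<omega>. (\<Sum>r\<in>{p+1..p+l}. (b r / real l) * Y r \<omega>)\<^sup>2)"
    and "integral\<^sup>L M (\<lambda>\<omega>. (\<Sum>r\<in>{p+1..p+l}. (b r / real l) * Y r \<omega>)\<^sup>2)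
         \<le> 2 * K\<^sup>2 * ((\<Sum>d<l. \<bar>cY d\<bar>) / real l)"
proof -
  note sb = sq_sum_bound[of "{p+1..p+l}" M Y "\<lambda>i j. \<bar>cY (ndist i j)\<bar>" "\<lambda>r. b r / real l"]
  have h1: "\<And>i j. i \<in> {p+1..p+l} \<Longrightarrow> j \<in> {p+1..p+l} \<Longrightarrow> integrable M (\<lambda>x. Y i x * Y j x)"
    using prodY(1) by auto
  have h2: "\<And>i j. i \<in> {p+1..p+l} \<Longrightarrow> j \<in> {p+1..p+l} \<Longrightarrow> \<bar>integral\<^sup>L M (\<lambda>x. Y i x * Y j x)\<bar> \<le> \<bar>cY (ndist i j)\<bar>"
    using prodY(2) by auto
  show "integrable M (\<lambda>\<omega>. (\<Sum>r\<in>{p+1..p+l}. (b r / real l) * Y r \<omega>)\<^sup>2)"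
    using sb(1)[OF _ h1 h2] by simp
  have "integral\<^sup>L M (\<lambda>\<omega>. (\<Sum>r\<in>{p+1..p+l}. (b r / real l) * Y r \<omega>)\<^sup>2)
     \<le> (\<Sum>i\<in>{p+1..p+l}. \<Sum>j\<in>{p+1..p+l}. \<bar>b i / real l\<bar> * \<bar>b j / real l\<bar> * \<bar>cY (ndist i j)\<bar>)"
    using sb(2)[OF _ h1 h2] by simp
  also have "\<dots> \<le> (\<Sum>i\<in>{p+1..p+l}. \<Sum>j\<in>{p+1..p+l}. (K / real l) * (K / real l) * \<bar>cY (ndist i j)\<bar>)"
  proof (intro sum_mono mult_right_mono mult_mono)
    fix i j assume ij: "i \<in> {p+1..p+l}" "j \<in> {p+1..p+l}"
    show "\<bar>b i / real l\<bar> \<le> K / real l" "\<bar>b j / real l\<bar> \<le> K / real l"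
      using K[OF ij(1)] K[OF ij(2)] by (auto simp: divide_right_mono)
    show "0 \<le> K / real l" using K[OF ij(1)] by simp
  qed auto
  also have "\<dots> = (K / real l) * (K / real l) * (\<Sum>i\<in>{p+1..p+l}. \<Sum>j\<in>{p+1..p+l}. \<bar>cY (ndist i j)\<bar>)"
    by (simp add: sum_distrib_left)
  also have "\<dots> \<le> (K / real l) * (K / real l) * (2 * real l * (\<Sum>d<l. \<bar>cY d\<bar>))"
    by (intro mult_left_mono dist_sum_bound) auto
  also have "\<dots> = 2 * K\<^sup>2 * ((\<Sum>d<l. \<bar>cY d\<bar>) / real l)"
    using alg1[of "real l" K] l by (simp add: power2_eq_square mult.assoc)
  finally show "integral\<^sup>L M (\<lambda>\<omega>. (\<Sum>r\<in>{p+1..p+l}. (b r / real l) * Y r \<omega>)\<^sup>2)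
         \<le> 2 * K\<^sup>2 * ((\<Sum>d<l. \<bar>cY d\<bar>) / real l)" .
qed

end


lemma block_props:
  fixes n l i :: nat
  assumes l: "l \<ge> 1" and dvd: "l dvd n" and i: "i \<in> {1..n}"
  defines "p \<equiv> ((i - 1) div l) * l"
  shows "p + l \<le> n" "i \<in> {p+1..p+l}" "\<And>r. r \<in> {p+1..p+l} \<Longrightarrow> r \<in> {1..n}"
    "\<And>r. r \<in> {p+1..p+l} \<Longrightarrow> \<bar>real r - real i\<bar> \<le> real l"
proof -
  obtain q where q: "n = l * q" using dvd by auto
  have "i - 1 < l * q" using i q by auto
  then have "(i - 1) div l < q" using l by (simp add: div_less_iff_less_mult mult.commute)
  then have "(i - 1) div l + 1 \<le> q" by simp
  then have "((i - 1) div l + 1) * l \<le> q * l" by (rule mult_right_mono) simp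
  then show pl: "p + l \<le> n" unfolding p_def q by (simp add: algebra_simps)
  have a: "p \<le> i - 1" unfolding p_def by (simp add: div_times_less_eq_dividend)
  have b: "i - 1 < p + l"
  proof -
    have "i - 1 = p + (i - 1) mod l" unfolding p_def by simp
    moreover have "(i - 1) mod l < l" using l by simp
    ultimately show ?thesis by linarith
  qed
  show "i \<in> {p+1..p+l}" using a b i by auto
  show "\<And>r. r \<in> {p+1..p+l} \<Longrightarrow> r \<in> {1..n}" using pl by auto
  show "\<And>r. r \<in> {p+1..p+l} \<Longrightarrow> \<bar>real r - real i\<bar> \<le> real l" using a b i by auto
qed

lemma demeaned_block:
  fixes n l i :: nat
  assumes l: "blk s n = l" "l \<ge> 1"
  defines "p \<equiv> ((i - 1) div l) * l"
  shows "demeaned sig mu Y s n i \<omega> = obs sig mu Y n i \<omega> - (1 / real l) * (\<Sum>r\<in>{p+1..p+l}. obs sig mu Y n r \<omega>)"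
proof -
  have "((i - 1) div l + 1 - 1) * l + 1 = p + 1" "((i - 1) div l + 1) * l = p + l"
    unfolding p_def by (simp_all add: algebra_simps)
  then show ?thesis unfolding demeaned_def Let_def l(1) by (simp add: add.commute)
qed


lemma sq_le_2: "((x::real) - y)\<^sup>2 \<le> 2 * x\<^sup>2 + 2 * y\<^sup>2"
proof -
  have "0 \<le> (x + y)\<^sup>2" by simp
  then show ?thesis by (simp add: power2_eq_square algebra_simps)
qed

context
  fixes M :: "'a measure" and Y :: "nat \<Rightarrow> 'a \<Rightarrow> real"
  assumes P: "prob_space M" and meas: "\<And>i. Y i \<in> borel_measurable M"
    and stat: "strictly_stationary M Y"
    and var1: "integral\<^sup>L M (\<lambda>\<omega>. (Y 1 \<omega>)^2) = 1"
    and Y4: "integrable M (\<lambda>\<omega>. (Y 1 \<omega>)^4)"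
begin

interpretation prob_space M by (rule P)

lemma EV_bound:
  fixes sig mu :: "real \<Rightarrow> real" and n l :: nat and K Cm s :: real
  assumes n: "n \<ge> 1" and l: "l \<ge> 1" "blk s n = l" "l dvd n"
    and sigK: "\<And>z. z \<in> {0..1} \<Longrightarrow> \<bar>sig z\<bar> \<le> K"
    and lipm: "Cm-lipschitz_on {0..1} mu"
  shows "integrable M (\<lambda>\<omega>. (1 / real n) * (\<Sum>i\<in>{1..n}. (demeaned sig mu Y s n i \<omega> - sig (real i / real n) * Y i \<omega>)\<^sup>2))"
    and "integral\<^sup>L M (\<lambda>\<omega>. (1 / real n) * (\<Sum>i\<in>{1..n}. (demeaned sig mu Y s n i \<omega> - sig (real i / real n) * Y i \<omega>)\<^sup>2))
      \<le> 2 * (Cm * real l / real n)\<^sup>2 + 4 * K\<^sup>2 * ((\<Sum>d<l. \<bar>cY M Y d\<bar>) / real l)"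
proof -
  define v where "v i \<omega> = demeaned sig mu Y s n i \<omega> - sig (real i / real n) * Y i \<omega>" for i \<omega>
  define bnd where "bnd = 2 * (Cm * real l / real n)\<^sup>2 + 4 * K\<^sup>2 * ((\<Sum>d<l. \<bar>cY M Y d\<bar>) / real l)"
  have npos: "real n > 0" using n by simp
  have lpos: "real l > 0" using l by simp
  have Cm0: "0 \<le> Cm" using lipm by (rule lipschitz_on_nonneg)
  have each: "integrable M (\<lambda>\<omega>. (v i \<omega>)\<^sup>2) \<and> integral\<^sup>L M (\<lambda>\<omega>. (v i \<omega>)\<^sup>2) \<le> bnd" if i: "i \<in> {1..n}" for i
  proof -
    define p where "p = ((i - 1) div l) * l"
    note bp = block_props[OF l(1) l(3) i, folded p_def]
    define x where "x = mu (real i / real n) - (1 / real l) * (\<Sum>r\<in>{p+1..p+l}. mu (real r / real n))"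
    define A where "A \<omega> = (\<Sum>r\<in>{p+1..p+l}. (sig (real r / real n) / real l) * Y r \<omega>)" for \<omega>
    have veq: "v i \<omega> = x - A \<omega>" for \<omega>
    proof -
      have "demeaned sig mu Y s n i \<omega> = obs sig mu Y n i \<omega> - (1 / real l) * (\<Sum>r\<in>{p+1..p+l}. obs sig mu Y n r \<omega>)"
        unfolding p_def by (rule demeaned_block[OF l(2,1)])
      then show ?thesis unfolding v_def x_def A_def obs_def
        by (simp add: sum.distrib sum_distrib_left algebra_simps sum_divide_distrib)
    qed
    have xb: "\<bar>x\<bar> \<le> Cm * real l / real n"
    proof -
      have card: "real (card {p+1..p+l}) = real l" by simp
      have "x = (1 / real l) * (\<Sum>r\<in>{p+1..p+l}. mu (real i / real n) - mu (real r / real n))"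
        unfolding x_def using lpos by (simp add: sum_subtractf card field_simps)
      also have "\<bar>\<dots>\<bar> \<le> (1 / real l) * (\<Sum>r\<in>{p+1..p+l}. Cm * real l / real n)"
      proof -
        have "\<bar>\<Sum>r\<in>{p+1..p+l}. mu (real i / real n) - mu (real r / real n)\<bar> \<le> (\<Sum>r\<in>{p+1..p+l}. \<bar>mu (real i / real n) - mu (real r / real n)\<bar>)"
          by (rule sum_abs)
        also have "\<dots> \<le> (\<Sum>r\<in>{p+1..p+l}. Cm * real l / real n)"
        proof (rule sum_mono)
          fix r assume r: "r \<in> {p+1..p+l}"
          have ri: "real i / real n \<in> {0..1}" "real r / real n \<in> {0..1}" using i bp(3)[OF r] npos by auto
          have "\<bar>mu (real i / real n) - mu (real r / real n)\<bar> \<le> Cm * \<bar>real i / real n - real r / real n\<bar>"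
            using lipschitz_onD[OF lipm ri] by (simp add: dist_real_def)
          also have "\<bar>real i / real n - real r / real n\<bar> = \<bar>real r - real i\<bar> / real n"
            using npos by (simp add: abs_minus_commute diff_divide_distrib[symmetric])
          also have "\<dots> \<le> real l / real n" using bp(4)[OF r] npos by (simp add: divide_right_mono)
          finally show "\<bar>mu (real i / real n) - mu (real r / real n)\<bar> \<le> Cm * real l / real n"
            using Cm0 by (simp add: mult_left_mono)
        qed
        finally have S: "\<bar>\<Sum>r\<in>{p+1..p+l}. mu (real i / real n) - mu (real r / real n)\<bar> \<le> (\<Sum>r\<in>{p+1..p+l}. Cm * real l / real n)" .
        have eq: "\<bar>(1 / real l) * (\<Sum>r\<in>{p+1..p+l}. mu (real i / real n) - mu (real r / real n))\<bar>
          = (1 / real l) * \<bar>\<Sum>r\<in>{p+1..p+l}. mu (real i / real n) - mu (real r / real n)\<bar>"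
          using lpos by (simp add: abs_mult)
        show ?thesis by (rule order_trans[OF eq[THEN eq_refl] mult_left_mono[OF S]]) simp
      qed
      also have "\<dots> = Cm * real l / real n" using lpos by simp
      finally show ?thesis .
    qed
    have Am: "A \<in> borel_measurable M" unfolding A_def using meas by measurable
    have KA: "\<And>r. r \<in> {p+1..p+l} \<Longrightarrow> \<bar>sig (real r / real n)\<bar> \<le> K"
      using bp(3) npos by (intro sigK) auto
    have A2: "integrable M (\<lambda>\<omega>. (A \<omega>)\<^sup>2)" "integral\<^sup>L M (\<lambda>\<omega>. (A \<omega>)\<^sup>2) \<le> 2 * K\<^sup>2 * ((\<Sum>d<l. \<bar>cY M Y d\<bar>) / real l)"
      unfolding A_def using var_A[OF P meas stat var1 Y4 l(1) KA] by auto
    have vb: "(v i \<omega>)\<^sup>2 \<le> 2 * x\<^sup>2 + 2 * (A \<omega>)\<^sup>2" for \<omega> unfolding veq by (rule sq_le_2)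
    have vm: "(\<lambda>\<omega>. (v i \<omega>)\<^sup>2) \<in> borel_measurable M" unfolding veq using Am by measurable
    have i2: "integrable M (\<lambda>\<omega>. 2 * x\<^sup>2 + 2 * (A \<omega>)\<^sup>2)" using A2(1) by simp
    have vi: "integrable M (\<lambda>\<omega>. (v i \<omega>)\<^sup>2)"
      by (rule Bochner_Integration.integrable_bound[OF i2 vm]) (use vb in auto)
    have "integral\<^sup>L M (\<lambda>\<omega>. (v i \<omega>)\<^sup>2) \<le> integral\<^sup>L M (\<lambda>\<omega>. 2 * x\<^sup>2 + 2 * (A \<omega>)\<^sup>2)"
      by (rule integral_mono[OF vi i2]) (use vb in auto)
    also have "\<dots> = 2 * x\<^sup>2 + 2 * integral\<^sup>L M (\<lambda>\<omega>. (A \<omega>)\<^sup>2)" using A2(1) by (simp add: prob_space)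
    also have "\<dots> \<le> bnd"
    proof -
      have "x\<^sup>2 \<le> (Cm * real l / real n)\<^sup>2"
        using xb by (metis abs_ge_zero abs_le_square_iff power2_abs order_trans abs_of_nonneg)
      then show ?thesis unfolding bnd_def using A2(2) by linarith
    qed
    finally show ?thesis using vi by simp
  qed
  have sumint: "integrable M (\<lambda>\<omega>. \<Sum>i\<in>{1..n}. (v i \<omega>)\<^sup>2)"
    using each by (intro Bochner_Integration.integrable_sum) auto
  show "integrable M (\<lambda>\<omega>. (1 / real n) * (\<Sum>i\<in>{1..n}. (demeaned sig mu Y s n i \<omega> - sig (real i / real n) * Y i \<omega>)\<^sup>2))"
    using sumint unfolding v_def by simp
  have "integral\<^sup>L M (\<lambda>\<omega>. (1 / real n) * (\<Sum>i\<in>{1..n}. (v i \<omega>)\<^sup>2)) = (1 / real n) * (\<Sum>i\<in>{1..n}. integral\<^sup>L M (\<lambda>\<omega>. (v i \<omega>)\<^sup>2))"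
    using each by (subst Bochner_Integration.integral_mult_right_zero) (simp add: Bochner_Integration.integral_sum)
  also have "\<dots> \<le> (1 / real n) * (\<Sum>i\<in>{1..n}. bnd)"
    using each npos by (intro mult_left_mono sum_mono) auto
  also have "\<dots> = bnd" using npos by simp
  finally show "integral\<^sup>L M (\<lambda>\<omega>. (1 / real n) * (\<Sum>i\<in>{1..n}. (demeaned sig mu Y s n i \<omega> - sig (real i / real n) * Y i \<omega>)\<^sup>2))
      \<le> 2 * (Cm * real l / real n)\<^sup>2 + 4 * K\<^sup>2 * ((\<Sum>d<l. \<bar>cY M Y d\<bar>) / real l)"
    unfolding v_def bnd_def .
qed

end


lemma sq_le_2': "((x::real) + y)\<^sup>2 \<le> 2 * x\<^sup>2 + 2 * y\<^sup>2"
proof -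
  have "0 \<le> (x - y)\<^sup>2" by simp
  then show ?thesis by (simp add: power2_eq_square algebra_simps)
qed

lemma aux2: "\<bar>w\<bar> \<le> E / 2 \<Longrightarrow> 0 \<le> (q::real) \<Longrightarrow> \<bar>2 * w + q\<bar> \<le> E + q"
  by arith

lemma perturb_sq:
  fixes x y :: "nat \<Rightarrow> real" and \<eta> c :: real
  assumes eta: "\<eta> > 0" and c: "c \<ge> 0"
  shows "\<bar>c * (\<Sum>i\<in>S. (x i)\<^sup>2) - c * (\<Sum>i\<in>S. (y i)\<^sup>2)\<bar>
    \<le> \<eta> * (c * (\<Sum>i\<in>S. (y i)\<^sup>2)) + (1 + 1 / \<eta>) * (c * (\<Sum>i\<in>S. (x i - y i)\<^sup>2))"
proof -
  have pt: "\<bar>(x i)\<^sup>2 - (y i)\<^sup>2\<bar> \<le> \<eta> * (y i)\<^sup>2 + (1 + 1 / \<eta>) * (x i - y i)\<^sup>2" for i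
  proof -
    define v where "v = x i - y i"
    have "(x i)\<^sup>2 - (y i)\<^sup>2 = 2 * (y i * v) + v\<^sup>2" unfolding v_def by (simp add: power2_eq_square algebra_simps)
    moreover have "\<bar>y i * v\<bar> \<le> (\<eta> * (y i)\<^sup>2 + v\<^sup>2 / \<eta>) / 2" by (rule young_ineq[OF eta])
    ultimately have "\<bar>(x i)\<^sup>2 - (y i)\<^sup>2\<bar> \<le> \<eta> * (y i)\<^sup>2 + v\<^sup>2 / \<eta> + v\<^sup>2"
      using aux2[of "y i * v" "\<eta> * (y i)\<^sup>2 + v\<^sup>2 / \<eta>" "v\<^sup>2"] by simp
    also have "\<dots> = \<eta> * (y i)\<^sup>2 + (1 + 1 / \<eta>) * v\<^sup>2" by (simp add: algebra_simps)
    finally show ?thesis unfolding v_def .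
  qed
  have "\<bar>c * (\<Sum>i\<in>S. (x i)\<^sup>2) - c * (\<Sum>i\<in>S. (y i)\<^sup>2)\<bar> = c * \<bar>\<Sum>i\<in>S. (x i)\<^sup>2 - (y i)\<^sup>2\<bar>"
    using c by (simp add: sum_subtractf right_diff_distrib[symmetric] abs_mult)
  also have "\<dots> \<le> c * (\<Sum>i\<in>S. \<eta> * (y i)\<^sup>2 + (1 + 1 / \<eta>) * (x i - y i)\<^sup>2)"
    by (intro mult_left_mono order_trans[OF sum_abs] sum_mono pt c)
  also have "\<dots> = \<eta> * (c * (\<Sum>i\<in>S. (y i)\<^sup>2)) + (1 + 1 / \<eta>) * (c * (\<Sum>i\<in>S. (x i - y i)\<^sup>2))"
    by (simp add: sum.distrib sum_distrib_left algebra_simps)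
  finally show ?thesis .
qed

context
  fixes M :: "'a measure" and Y :: "nat \<Rightarrow> 'a \<Rightarrow> real"
  assumes P: "prob_space M" and meas: "\<And>i. Y i \<in> borel_measurable M"
    and stat: "strictly_stationary M Y"
    and var1: "integral\<^sup>L M (\<lambda>\<omega>. (Y 1 \<omega>)^2) = 1"
    and Y4: "integrable M (\<lambda>\<omega>. (Y 1 \<omega>)^4)"
begin

interpretation prob_space M by (rule P)

lemma T_bound:
  fixes a :: "nat \<Rightarrow> real" and n :: nat and K I :: real
  assumes n: "n \<ge> 1" and K: "\<And>i. i \<in> {1..n} \<Longrightarrow> \<bar>a i\<bar> \<le> K"
  defines "T \<equiv> (\<lambda>\<omega>. (1 / real n) * (\<Sum>i\<in>{1..n}. (a i * Y i \<omega>)\<^sup>2))"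
  defines "ET \<equiv> (1 / real n) * (\<Sum>i\<in>{1..n}. (a i)\<^sup>2)"
  shows "integrable M T" "integral\<^sup>L M T = ET" "ET \<le> K\<^sup>2"
    "integrable M (\<lambda>\<omega>. (T \<omega> - I)\<^sup>2)"
    "integral\<^sup>L M (\<lambda>\<omega>. (T \<omega> - I)\<^sup>2) \<le> 4 * K^4 * ((\<Sum>d<n. \<bar>dY M Y d\<bar>) / real n) + 2 * (ET - I)\<^sup>2"
proof -
  have npos: "real n > 0" using n by simp
  have Tsum: "T \<omega> = (\<Sum>i\<in>{1..n}. ((a i)\<^sup>2 / real n) * (Y i \<omega>)\<^sup>2)" for \<omega>
    unfolding T_def by (simp add: sum_distrib_left power_mult_distrib)
  have Yi2: "i \<in> {1..n} \<Longrightarrow> integrable M (\<lambda>\<omega>. ((a i)\<^sup>2 / real n) * (Y i \<omega>)\<^sup>2)" for i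
    using Y2int[OF P meas stat var1 Y4, of i] by simp
  show Ti: "integrable M T" unfolding Tsum[abs_def]
    by (intro Bochner_Integration.integrable_sum Yi2)
  have "integral\<^sup>L M T = (\<Sum>i\<in>{1..n}. ((a i)\<^sup>2 / real n) * integral\<^sup>L M (\<lambda>\<omega>. (Y i \<omega>)\<^sup>2))"
    unfolding Tsum[abs_def] using Yi2 by (subst Bochner_Integration.integral_sum) auto
  also have "\<dots> = (\<Sum>i\<in>{1..n}. ((a i)\<^sup>2 / real n))"
    by (rule sum.cong) (auto simp: EY2[OF P meas stat var1 Y4])
  also have "\<dots> = ET" unfolding ET_def by (simp add: sum_divide_distrib)
  finally show ET: "integral\<^sup>L M T = ET" .
  show "ET \<le> K\<^sup>2"
  proof -
    have "(\<Sum>i\<in>{1..n}. (a i)\<^sup>2) \<le> (\<Sum>i\<in>{1..n}. K\<^sup>2)"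
    proof (rule sum_mono)
      fix i assume "i \<in> {1..n}"
      then have "\<bar>a i\<bar>^2 \<le> K^2" using K by (intro power_mono) auto
      then show "(a i)\<^sup>2 \<le> K\<^sup>2" by simp
    qed
    then have "(\<Sum>i\<in>{1..n}. (a i)\<^sup>2) \<le> real n * K\<^sup>2" by simp
    then show ?thesis unfolding ET_def using npos by (simp add: divide_le_eq mult.commute)
  qed
  define W where "W \<omega> = (\<Sum>i\<in>{1..n}. ((a i)\<^sup>2 / real n) * ((Y i \<omega>)\<^sup>2 - 1))" for \<omega>
  have WT: "T \<omega> - I = W \<omega> + (ET - I)" for \<omega>
  proof -
    have "W \<omega> = (\<Sum>i\<in>{1..n}. ((a i)\<^sup>2 / real n) * (Y i \<omega>)\<^sup>2) - (\<Sum>i\<in>{1..n}. (a i)\<^sup>2 / real n)"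
      unfolding W_def by (simp add: right_diff_distrib sum_subtractf)
    moreover have "ET = (\<Sum>i\<in>{1..n}. (a i)\<^sup>2 / real n)" unfolding ET_def by (simp add: sum_divide_distrib)
    ultimately show ?thesis unfolding Tsum by simp
  qed
  have W2: "integrable M (\<lambda>\<omega>. (W \<omega>)\<^sup>2)" "integral\<^sup>L M (\<lambda>\<omega>. (W \<omega>)\<^sup>2) \<le> 2 * K^4 * ((\<Sum>d<n. \<bar>dY M Y d\<bar>) / real n)"
    unfolding W_def using var_T[OF P meas stat var1 Y4 n K] by auto
  have Wm: "W \<in> borel_measurable M" unfolding W_def using meas by measurable
  have b: "(T \<omega> - I)\<^sup>2 \<le> 2 * (W \<omega>)\<^sup>2 + 2 * (ET - I)\<^sup>2" for \<omega>
    unfolding WT by (rule sq_le_2')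
  have i2: "integrable M (\<lambda>\<omega>. 2 * (W \<omega>)\<^sup>2 + 2 * (ET - I)\<^sup>2)" using W2(1) by simp
  have Tm: "T \<in> borel_measurable M" using Ti by auto
  show ii: "integrable M (\<lambda>\<omega>. (T \<omega> - I)\<^sup>2)"
    by (rule Bochner_Integration.integrable_bound[OF i2]) (use b Tm in auto)
  have "integral\<^sup>L M (\<lambda>\<omega>. (T \<omega> - I)\<^sup>2) \<le> integral\<^sup>L M (\<lambda>\<omega>. 2 * (W \<omega>)\<^sup>2 + 2 * (ET - I)\<^sup>2)"
    by (rule integral_mono[OF ii i2]) (use b in auto)
  also have "\<dots> = 2 * integral\<^sup>L M (\<lambda>\<omega>. (W \<omega>)\<^sup>2) + 2 * (ET - I)\<^sup>2" using W2(1) by (simp add: prob_space)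
  also have "\<dots> \<le> 4 * K^4 * ((\<Sum>d<n. \<bar>dY M Y d\<bar>) / real n) + 2 * (ET - I)\<^sup>2" using W2(2) by linarith
  finally show "integral\<^sup>L M (\<lambda>\<omega>. (T \<omega> - I)\<^sup>2) \<le> 4 * K^4 * ((\<Sum>d<n. \<bar>dY M Y d\<bar>) / real n) + 2 * (ET - I)\<^sup>2" .
qed

end


lemma Y4_from_A1:
  fixes y \<theta> :: real
  assumes "\<theta> > 0"
  shows "y ^ 4 \<le> 1 + \<bar>y\<bar> powr (4 + 2 * \<theta>)"
proof (cases "\<bar>y\<bar> \<le> 1")
  case True
  then have "\<bar>y\<bar> ^ 4 \<le> 1 ^ 4" by (intro power_mono) auto
  then show ?thesis by (simp add: power_abs[symmetric]) (smt (verit) powr_ge_zero)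
next
  case False
  then have "y ^ 4 = \<bar>y\<bar> powr (real 4)" by (simp add: powr_realpow power_abs[symmetric] power_even_abs)
  also have "\<dots> \<le> \<bar>y\<bar> powr (4 + 2 * \<theta>)" using False assms by (intro powr_mono) auto
  finally show ?thesis by simp
qed

theorem lemmaA6:
  fixes M :: "'a measure" and Y :: "nat \<Rightarrow> 'a \<Rightarrow> real"
    and sig mu :: "real \<Rightarrow> real" and sigma0 s \<theta> :: real
  assumes "prob_space M"
    and meas: "\<And>i. Y i \<in> borel_measurable M"
    and stat: "strictly_stationary M Y"
    and mean0: "integral\<^sup>L M (Y 1) = 0"
    and var1: "integral\<^sup>L M (\<lambda>\<omega>. (Y 1 \<omega>)^2) = 1"
    and abs_reg: "beta_Y M Y \<longlonglongrightarrow> 0"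
    and lip: "\<exists>C. C-lipschitz_on {0..1} mu"
    and cadlag: "cadlag01 sig"
    and sigma0: "sigma0 > 0" "\<forall>z\<in>{0..1}. sig z \<ge> sigma0"
    and s: "0 < s" "s < 1"
    and theta: "\<theta> > 0"
    and A1: "integrable M (\<lambda>\<omega>. \<bar>Y 1 \<omega>\<bar> powr (4 + 2 * \<theta>))"
    and A2: "summable (\<lambda>k. beta_Y M Y (Suc k) powr (\<theta> / (2 + \<theta>)))"
  shows "\<forall>\<epsilon>>0. \<forall>\<delta>>0. \<exists>N. \<forall>n\<ge>N.
           (\<exists>l::nat. real l = real n powr s \<and> l dvd n) \<longrightarrow>
           measure M {\<omega>\<in>space M. \<bar>sigmaH2 sig mu Y s n \<omega> - integral {0..1} (\<lambda>z. (sig z)^2)\<bar> > \<epsilon>} < \<delta>"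
proof -
  note P = assms(1)
  interpret prob_space M by (rule P)
  note meas' [measurable] = meas
  have Y4: "integrable M (\<lambda>\<omega>. (Y 1 \<omega>)^4)"
  proof (rule Bochner_Integration.integrable_bound[of _ "\<lambda>\<omega>. 1 + \<bar>Y 1 \<omega>\<bar> powr (4 + 2 * \<theta>)"])
    show "integrable M (\<lambda>\<omega>. 1 + \<bar>Y 1 \<omega>\<bar> powr (4 + 2 * \<theta>))" using A1 by simp
    show "AE \<omega> in M. norm ((Y 1 \<omega>)^4) \<le> norm (1 + \<bar>Y 1 \<omega>\<bar> powr (4 + 2 * \<theta>))"
      using Y4_from_A1[OF theta] by simp
  qed simp
  note ctx = P meas stat var1 Y4
  obtain B where B: "\<forall>z\<in>{0..1}. \<bar>sig z\<bar> \<le> B" using cadlag_bounded[OF cadlag] by blast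
  define K where "K = max B 1"
  have K: "\<And>z. z \<in> {0..1} \<Longrightarrow> \<bar>sig z\<bar> \<le> K" using B unfolding K_def by force
  have K1: "K \<ge> 1" unfolding K_def by simp
  obtain Cm where lipm: "Cm-lipschitz_on {0..1} mu" using lip by blast
  have Cm0: "0 \<le> Cm" using lipm by (rule lipschitz_on_nonneg)
  define I where "I = integral {0..1} (\<lambda>z. (sig z)^2)"
  have riem: "(\<lambda>n. (1 / real n) * (\<Sum>i=1..n. (sig (real i / real n))\<^sup>2)) \<longlonglongrightarrow> I"
    unfolding I_def
  proof (rule riemann_right_cont)
    fix z :: real assume z: "z \<in> {0..1}"
    have "\<bar>sig z\<bar>^2 \<le> K^2" using K[OF z] by (intro power_mono) auto
    then show "\<bar>(sig z)\<^sup>2\<bar> \<le> K\<^sup>2" by simp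
  next
    fix z :: real assume z: "z \<in> {0..<1}"
    then have "continuous (at_right z) sig" using cadlag unfolding cadlag01_def by auto
    then show "continuous (at_right z) (\<lambda>z. (sig z)\<^sup>2)" by (intro continuous_intros)
  qed
  have cY0: "cY M Y \<longlonglongrightarrow> 0"
  proof -
    have "(\<lambda>k. integral\<^sup>L M (\<lambda>w. Y 1 w * Y (Suc k) w) - (integral\<^sup>L M (\<lambda>w. Y 1 w))\<^sup>2) \<longlonglongrightarrow> 0"
      by (rule cov_decay[OF P meas stat abs_reg, of "\<lambda>x. x"]) (use Y2int[OF ctx, of 1] in auto)
    moreover have "cY M Y = (\<lambda>k. integral\<^sup>L M (\<lambda>w. Y 1 w * Y (Suc k) w))" by (simp add: fun_eq_iff cY_def[OF ctx])
    ultimately show ?thesis using mean0 by simp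
  qed
  have dY0: "dY M Y \<longlonglongrightarrow> 0"
  proof -
    have "(\<lambda>k. integral\<^sup>L M (\<lambda>w. (Y 1 w)\<^sup>2 * (Y (Suc k) w)\<^sup>2) - (integral\<^sup>L M (\<lambda>w. (Y 1 w)\<^sup>2))\<^sup>2) \<longlonglongrightarrow> 0"
      by (rule cov_decay[OF P meas stat abs_reg, of "\<lambda>x. x\<^sup>2"]) (use Y4int[OF ctx, of 1] in auto)
    moreover have "dY M Y = (\<lambda>k. integral\<^sup>L M (\<lambda>w. (Y 1 w)\<^sup>2 * (Y (Suc k) w)\<^sup>2) - 1)" by (simp add: fun_eq_iff dY_def[OF ctx])
    ultimately show ?thesis using var1 by simp
  qed
  have cesC: "(\<lambda>L. (\<Sum>d<L. \<bar>cY M Y d\<bar>) / real L) \<longlonglongrightarrow> 0" by (rule cesaro_abs[OF cY0])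
  have cesD: "(\<lambda>L. (\<Sum>d<L. \<bar>dY M Y d\<bar>) / real L) \<longlonglongrightarrow> 0" by (rule cesaro_abs[OF dY0])
  show ?thesis
  proof (intro allI impI)
    fix \<epsilon> \<delta> :: real assume \<epsilon>: "\<epsilon> > 0" and \<delta>: "\<delta> > 0"
    show "\<exists>N. \<forall>n\<ge>N. (\<exists>l::nat. real l = real n powr s \<and> l dvd n) \<longrightarrow>
           measure M {\<omega>\<in>space M. \<bar>sigmaH2 sig mu Y s n \<omega> - integral {0..1} (\<lambda>z. (sig z)^2)\<bar> > \<epsilon>} < \<delta>"
    proof -
      define \<rho> where "\<rho> = \<epsilon> * \<delta> / 2"
      define \<eta> where "\<eta> = \<epsilon> * \<delta> / (4 * (K\<^sup>2 + 1))"
      define \<tau>1 where "\<tau>1 = \<rho> * \<epsilon> * \<delta> / 2"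
      define \<tau>2 where "\<tau>2 = \<epsilon> * \<delta> / (4 * (1 + 1 / \<eta>))"
      have ed: "\<epsilon> * \<delta> > 0" using \<epsilon> \<delta> by simp
      have \<rho>: "\<rho> > 0" unfolding \<rho>_def using ed by simp
      have "4 * (K\<^sup>2 + 1) > 0" by (simp add: add_nonneg_pos)
      then have \<eta>: "\<eta> > 0" unfolding \<eta>_def using ed by (intro divide_pos_pos)
      have \<tau>1: "\<tau>1 > 0" unfolding \<tau>1_def using mult_pos_pos[OF \<rho> ed] by (simp add: mult.assoc)
      have "4 * (1 + 1 / \<eta>) > 0" using \<eta> by (simp add: add_pos_pos)
      then have \<tau>2: "\<tau>2 > 0" unfolding \<tau>2_def using ed by (intro divide_pos_pos)
      have K4: "8 * K^4 + 1 > 0" by (simp add: add_nonneg_pos)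
      have K2: "8 * K\<^sup>2 + 1 > 0" by (simp add: add_nonneg_pos)
      obtain N1 where N1: "\<And>n. n \<ge> N1 \<Longrightarrow> (\<Sum>d<n. \<bar>dY M Y d\<bar>) / real n < \<tau>1 / (8 * K^4 + 1)"
        using order_tendstoD(2)[OF cesD, of "\<tau>1 / (8 * K^4 + 1)"] \<tau>1 K4
        by (auto simp: eventually_sequentially)
      obtain N2 where N2: "\<And>n. n \<ge> N2 \<Longrightarrow> \<bar>(1 / real n) * (\<Sum>i=1..n. (sig (real i / real n))\<^sup>2) - I\<bar> < min 1 (\<tau>1 / 4)"
      proof -
        have "min 1 (\<tau>1 / 4) > 0" using \<tau>1 by simp
        from LIMSEQ_D[OF riem this] that show ?thesis by (auto simp: dist_real_def)
      qed
      obtain N3 where N3: "\<And>n. n \<ge> N3 \<Longrightarrow> 4 * (Cm\<^sup>2 + 1) / \<tau>2 + 1 \<le> real n powr (1 - s)"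
        using powr_large[of "1 - s" "4 * (Cm\<^sup>2 + 1) / \<tau>2 + 1"] s by auto
      obtain L0 where L0: "\<And>L. L \<ge> L0 \<Longrightarrow> (\<Sum>d<L. \<bar>cY M Y d\<bar>) / real L < \<tau>2 / (8 * K\<^sup>2 + 1)"
        using order_tendstoD(2)[OF cesC, of "\<tau>2 / (8 * K\<^sup>2 + 1)"] \<tau>2 K2
        by (auto simp: eventually_sequentially)
      obtain N4 where N4: "\<And>n. n \<ge> N4 \<Longrightarrow> real L0 \<le> real n powr s"
        using powr_large[of s "real L0"] s by auto
      show ?thesis
      proof (intro exI[of _ "max (max N1 N2) (max (max N3 N4) 1)"] allI impI)
        fix n assume n: "n \<ge> max (max N1 N2) (max (max N3 N4) 1)"
        assume "\<exists>l::nat. real l = real n powr s \<and> l dvd n"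
        then obtain l :: nat where l: "real l = real n powr s" "l dvd n" by blast
        have n1: "n \<ge> 1" using n by simp
        have npos: "real n > 0" using n1 by simp
        have lpos: "real l > 0" using l(1) npos by simp
        then have l1: "l \<ge> 1" by simp
        have blk: "blk s n = l" unfolding blk_def l(1)[symmetric] by simp
        define a where "a i = sig (real i / real n)" for i
        have aK: "\<And>i. i \<in> {1..n} \<Longrightarrow> \<bar>a i\<bar> \<le> K" unfolding a_def using npos by (intro K) auto
        define T where "T = (\<lambda>\<omega>. (1 / real n) * (\<Sum>i\<in>{1..n}. (a i * Y i \<omega>)\<^sup>2))"
        define ET where "ET = (1 / real n) * (\<Sum>i\<in>{1..n}. (a i)\<^sup>2)"
        define V where "V = (\<lambda>\<omega>. (1 / real n) * (\<Sum>i\<in>{1..n}. (demeaned sig mu Y s n i \<omega> - sig (real i / real n) * Y i \<omega>)\<^sup>2))"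
        have Tapp: "T \<omega> = (1 / real n) * (\<Sum>i\<in>{1..n}. (a i * Y i \<omega>)\<^sup>2)" for \<omega> unfolding T_def ..
        note TBa = T_bound(1-3)[where a=a and K=K and n=n, OF ctx n1 aK, folded T_def ET_def]
        note TBb = T_bound(4,5)[where a=a and K=K and n=n and I=I, OF ctx n1 aK, folded Tapp ET_def]
        note TB = TBa TBb
        note VB = EV_bound[where sig=sig and mu=mu and n=n and l=l and K=K and Cm=Cm and s=s, OF ctx n1 l1 blk l(2) K lipm, folded V_def]
        define Z where "Z \<omega> = (T \<omega> - I)\<^sup>2 / (2 * \<rho>) + \<rho> / 2 + \<eta> * T \<omega> + (1 + 1 / \<eta>) * V \<omega>" for \<omega>
        have Zint: "integrable M Z" unfolding Z_def using TB(1,4) VB(1) by simp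
        have EZ: "integral\<^sup>L M Z = integral\<^sup>L M (\<lambda>\<omega>. (T \<omega> - I)\<^sup>2) / (2 * \<rho>) + \<rho> / 2 + \<eta> * ET + (1 + 1 / \<eta>) * integral\<^sup>L M V"
          unfolding Z_def using TB(1,2,4) VB(1) by (simp add: prob_space)
        have t1: "integral\<^sup>L M (\<lambda>\<omega>. (T \<omega> - I)\<^sup>2) < \<tau>1"
        proof -
          have c1: "4 * K^4 * ((\<Sum>d<n. \<bar>dY M Y d\<bar>) / real n) < \<tau>1 / 2"
          proof -
            have "(\<Sum>d<n. \<bar>dY M Y d\<bar>) / real n < \<tau>1 / (8 * K^4 + 1)" using N1 n by simp
            moreover have "0 \<le> K^4" by simp
            ultimately have "4 * K^4 * ((\<Sum>d<n. \<bar>dY M Y d\<bar>) / real n) \<le> 4 * K^4 * (\<tau>1 / (8 * K^4 + 1))"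
              by (intro mult_left_mono) auto
            also have "\<dots> < \<tau>1 / 2" using \<tau>1 K4 by (simp add: field_simps)
            finally show ?thesis .
          qed
          have c2: "2 * (ET - I)\<^sup>2 < \<tau>1 / 2"
          proof -
            have ETeq: "ET = (1 / real n) * (\<Sum>i=1..n. (sig (real i / real n))\<^sup>2)" unfolding ET_def a_def ..
            have d: "\<bar>ET - I\<bar> < min 1 (\<tau>1 / 4)" unfolding ETeq using N2 n by simp
            have "(ET - I)\<^sup>2 = \<bar>ET - I\<bar> * \<bar>ET - I\<bar>" by (simp add: power2_eq_square abs_mult[symmetric])
            also have "\<dots> \<le> \<bar>ET - I\<bar> * 1" using d by (intro mult_left_mono) auto
            finally show ?thesis using d by simp
          qed
          show ?thesis using TB(5) c1 c2 by linarith
        qed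
        have t2: "integral\<^sup>L M V < \<tau>2"
        proof -
          have lle: "l \<le> n" using l(2) n1 by (simp add: dvd_imp_le)
          define u where "u = real l / real n"
          have u0: "0 \<le> u" "u \<le> 1" unfolding u_def using lle npos by auto
          have ueq: "u = 1 / real n powr (1 - s)"
            unfolding u_def l(1) using npos by (simp add: powr_diff)
          have big: "4 * (Cm\<^sup>2 + 1) / \<tau>2 < real n powr (1 - s)" using N3[of n] n by simp
          have ub: "u * (4 * (Cm\<^sup>2 + 1)) < \<tau>2"
          proof -
            have pp: "real n powr (1 - s) > 0" using npos by simp
            have "4 * (Cm\<^sup>2 + 1) < \<tau>2 * real n powr (1 - s)" using big \<tau>2 by (simp add: divide_less_eq mult.commute)
            then show ?thesis unfolding ueq using pp by (simp add: divide_less_eq mult.commute)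
          qed
          have c1: "2 * (Cm * real l / real n)\<^sup>2 < \<tau>2 / 2"
          proof -
            have "(Cm * real l / real n)\<^sup>2 = Cm\<^sup>2 * u * u" unfolding u_def by (simp add: power2_eq_square)
            also have "\<dots> \<le> (Cm\<^sup>2 + 1) * u * 1" using u0 by (intro mult_mono) auto
            finally have "(Cm * real l / real n)\<^sup>2 \<le> (Cm\<^sup>2 + 1) * u * 1" .
            moreover have "(Cm\<^sup>2 + 1) * u * 1 = u * (4 * (Cm\<^sup>2 + 1)) / 4" by simp
            ultimately show ?thesis using ub by linarith
          qed
          have c2: "4 * K\<^sup>2 * ((\<Sum>d<l. \<bar>cY M Y d\<bar>) / real l) < \<tau>2 / 2"
          proof -
            have "real L0 \<le> real l" using N4[of n] n l(1) by simp
            then have "(\<Sum>d<l. \<bar>cY M Y d\<bar>) / real l < \<tau>2 / (8 * K\<^sup>2 + 1)" by (intro L0) simp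
            then have "4 * K\<^sup>2 * ((\<Sum>d<l. \<bar>cY M Y d\<bar>) / real l) \<le> 4 * K\<^sup>2 * (\<tau>2 / (8 * K\<^sup>2 + 1))"
              by (intro mult_left_mono) auto
            also have "\<dots> < \<tau>2 / 2" using \<tau>2 K2 by (simp add: field_simps)
            finally show ?thesis .
          qed
          show ?thesis using VB(2) c1 c2 by linarith
        qed
        have EZb: "integral\<^sup>L M Z < \<epsilon> * \<delta>"
        proof -
          have a1: "integral\<^sup>L M (\<lambda>\<omega>. (T \<omega> - I)\<^sup>2) / (2 * \<rho>) < \<epsilon> * \<delta> / 4"
            using t1 \<rho> unfolding \<tau>1_def by (simp add: divide_less_eq field_simps)
          have a2: "\<rho> / 2 = \<epsilon> * \<delta> / 4" unfolding \<rho>_def by simp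
          have a3: "\<eta> * ET < \<epsilon> * \<delta> / 4"
          proof -
            have "\<eta> * ET \<le> \<eta> * K\<^sup>2" using TB(3) \<eta> by (intro mult_left_mono) auto
            also have "\<dots> < \<epsilon> * \<delta> / 4"
            proof -
              have f: "K\<^sup>2 / (K\<^sup>2 + 1) < 1" by (simp add: add_nonneg_pos)
              have "\<eta> * K\<^sup>2 = (\<epsilon> * \<delta> / 4) * (K\<^sup>2 / (K\<^sup>2 + 1))" unfolding \<eta>_def by simp
              also have "\<dots> < (\<epsilon> * \<delta> / 4) * 1" by (rule mult_strict_left_mono[OF f]) (use ed in simp)
              finally show ?thesis by simp
            qed
            finally show ?thesis .
          qed
          have a4: "(1 + 1 / \<eta>) * integral\<^sup>L M V < \<epsilon> * \<delta> / 4"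
          proof -
            have p: "0 < 1 + 1 / \<eta>" using \<eta> by (simp add: add_pos_pos)
            have "(1 + 1 / \<eta>) * integral\<^sup>L M V < (1 + 1 / \<eta>) * \<tau>2" using t2 p by simp
            also have "\<dots> = \<epsilon> * \<delta> / 4" unfolding \<tau>2_def using p by (simp add: field_simps)
            finally show ?thesis .
          qed
          show ?thesis unfolding EZ using a1 a2 a3 a4 by linarith
        qed
        have dom: "\<bar>sigmaH2 sig mu Y s n \<omega> - I\<bar> \<le> Z \<omega>" for \<omega>
        proof -
          have p1: "\<bar>sigmaH2 sig mu Y s n \<omega> - T \<omega>\<bar> \<le> \<eta> * T \<omega> + (1 + 1 / \<eta>) * V \<omega>"
            unfolding sigmaH2_def T_def V_def a_def
            using perturb_sq[where c="1 / real n" and S="{1..n}" and x="\<lambda>i. demeaned sig mu Y s n i \<omega>" and y="\<lambda>i. sig (real i / real n) * Y i \<omega>", OF \<eta>]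
            by simp
          have p2: "\<bar>T \<omega> - I\<bar> \<le> (T \<omega> - I)\<^sup>2 / (2 * \<rho>) + \<rho> / 2"
          proof -
            have "\<bar>(T \<omega> - I) * 1\<bar> \<le> ((1 / \<rho>) * (T \<omega> - I)\<^sup>2 + 1\<^sup>2 / (1 / \<rho>)) / 2"
              by (rule young_ineq) (use \<rho> in simp)
            then show ?thesis by simp
          qed
          show ?thesis unfolding Z_def using p1 p2 by linarith
        qed
        have Zm: "Z \<in> borel_measurable M" using Zint by auto
        have "measure M {\<omega>\<in>space M. \<bar>sigmaH2 sig mu Y s n \<omega> - I\<bar> > \<epsilon>} \<le> measure M {\<omega>\<in>space M. Z \<omega> \<ge> \<epsilon>}"
        proof (rule finite_measure_mono)
          show "{\<omega>\<in>space M. \<bar>sigmaH2 sig mu Y s n \<omega> - I\<bar> > \<epsilon>} \<subseteq> {\<omega>\<in>space M. Z \<omega> \<ge> \<epsilon>}"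
            using dom by (auto intro: less_imp_le order_trans)
          show "{\<omega>\<in>space M. Z \<omega> \<ge> \<epsilon>} \<in> sets M" using Zm by measurable
        qed
        also have "\<dots> \<le> integral\<^sup>L M Z / \<epsilon>"
        proof (rule integral_Markov_inequality_measure[OF Zint _ _ \<epsilon>])
          show "space M \<in> sets M" by simp
          show "AE x in M. 0 \<le> Z x" using dom by (auto intro: order_trans[OF abs_ge_zero])
        qed
        also have "\<dots> < \<delta>" using EZb \<epsilon> by (simp add: divide_less_eq mult.commute)
        finally show "measure M {\<omega>\<in>space M. \<bar>sigmaH2 sig mu Y s n \<omega> - integral {0..1} (\<lambda>z. (sig z)^2)\<bar> > \<epsilon>} < \<delta>"
          unfolding I_def .
      qed
    qed
  qed
qed


end
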